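(* Let $n\ge3$, let $a_1,\dots,a_{n-1}$ be pairwise distinct integers, and for integers $a\notin\{a_1,\dots,a_{n-1}\}$ let $K_a=\mathbb Q(\xi)$, where $\xi$ is a root of $f_a(x)=(x-a_1)\cdots(x-a_{n-1})(x-a)-1$. There is $A_1$ depending only on $a_1,\dots,a_{n-1}$ such that for every integer $A\ge A_1$ the following holds: if $S$ is a set of integers $a$ with $A\le|a|\le2A$ such that all fields $K_a$, $a\in S$, are isomorphic to one and the same field, then $|S|\le n(n-1)(n-2)$.
   Context: The polynomial $f_a$ is irreducible over $\mathbb Q$, so the isomorphism class of $K_a$ does not depend on the choice of the root $\xi$. *)

theory Defs
  imports "HOL-Computational_Algebra.Polynomial" Complex_Main
begin

definition f_poly :: "nat \<Rightarrow> (nat \<Rightarrow> int) \<Rightarrow> int \<Rightarrow> int poly" where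
  "f_poly n a c = (\<Prod>i<n-1. [:- a i, 1:]) * [:- c, 1:] - 1"

definition gen_field :: "complex \<Rightarrow> complex set" where
  "gen_field \<xi> = \<Inter>{F. \<xi> \<in> F \<and> 0 \<in> F \<and> 1 \<in> F \<and>
      (\<forall>x\<in>F. \<forall>y\<in>F. x + y \<in> F \<and> x * y \<in> F) \<and> (\<forall>x\<in>F. - x \<in> F) \<and>
      (\<forall>x\<in>F. x \<noteq> 0 \<longrightarrow> inverse x \<in> F)}"

definition fields_iso :: "complex set \<Rightarrow> complex set \<Rightarrow> bool" where
  "fields_iso F G \<longleftrightarrow> (\<exists>\<phi>. bij_betw \<phi> F G \<and> \<phi> 1 = 1 \<and>
      (\<forall>x\<in>F. \<forall>y\<in>F. \<phi> (x + y) = \<phi> x + \<phi> y \<and> \<phi> (x * y) = \<phi> x * \<phi> y))"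

end

theory Submission
  imports Defs "Jordan_Normal_Form.Char_Poly" "HOL-Computational_Algebra.Field_as_Ring"
begin

definition stab :: "complex \<Rightarrow> bool" where
  "stab x \<longleftrightarrow> (\<exists>m (v::nat\<Rightarrow>complex) (A::nat\<Rightarrow>nat\<Rightarrow>int). (\<exists>i<m. v i \<noteq> 0) \<and>
     (\<forall>i<m. x * v i = (\<Sum>j<m. of_int (A i j) * v j)))"

lemma stab_imp_algint:
  assumes "stab x" shows "algebraic_int x"
proof -
  obtain m and v :: "nat \<Rightarrow> complex" and A :: "nat \<Rightarrow> nat \<Rightarrow> int" where nz: "\<exists>i<m. v i \<noteq> 0" and eq: "\<forall>i<m. x * v i = (\<Sum>j<m. of_int (A i j) * v j)"
    using assms unfolding stab_def by blast
  define B :: "int mat" where "B = mat m m (\<lambda>(i,j). A i j)"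
  define Bc :: "complex mat" where "Bc = of_int_hom.mat_hom B"
  define w where "w = vec m v"
  have B: "B \<in> carrier_mat m m" unfolding B_def by auto
  have Bc: "Bc \<in> carrier_mat m m" unfolding Bc_def B_def by auto
  have "Bc *\<^sub>v w = x \<cdot>\<^sub>v w"
  proof (rule eq_vecI)
    fix i assume "i < dim_vec (x \<cdot>\<^sub>v w)"
    hence i: "i < m" unfolding w_def by auto
    have "(Bc *\<^sub>v w) $ i = (\<Sum>j<m. of_int (A i j) * v j)"
      using i unfolding Bc_def B_def w_def
      by (auto simp: scalar_prod_def lessThan_atLeast0 intro!: sum.cong)
    also have "\<dots> = x * v i" using eq i by simp
    finally show "(Bc *\<^sub>v w) $ i = (x \<cdot>\<^sub>v w) $ i" using i unfolding w_def by simp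
  qed (auto simp: Bc_def B_def w_def)
  moreover have "w \<noteq> 0\<^sub>v m"
  proof
    assume "w = 0\<^sub>v m"
    then have "\<forall>i<m. v i = 0" unfolding w_def by (metis index_vec index_zero_vec(1))
    with nz show False by auto
  qed
  ultimately have "eigenvector Bc w x" unfolding eigenvector_def w_def using Bc by auto
  hence "eigenvalue Bc x" unfolding eigenvalue_def by auto
  hence "poly (char_poly Bc) x = 0" using eigenvalue_root_char_poly[OF Bc] by simp
  hence "poly (of_int_poly (char_poly B)) x = 0"
    unfolding Bc_def of_int_hom.char_poly_hom[OF B] .
  moreover have "lead_coeff (char_poly B) = 1" using degree_monic_char_poly[OF B] by simp
  ultimately show ?thesis unfolding algebraic_int_altdef_ipoly by blast
qed

lemma algint_imp_stab:
  assumes "algebraic_int (x::complex)" shows "stab x"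
proof -
  obtain p where p0: "poly (of_int_poly p) x = 0" and p1: "lead_coeff p = 1"
    using assms unfolding algebraic_int_altdef_ipoly by blast
  define m where "m = degree p"
  have "m \<noteq> 0"
  proof
    assume "m = 0"
    then have "degree p = 0" unfolding m_def .
    then obtain a0 where "p = [:a0:]" by (rule degree_eq_zeroE)
    with p1 have "p = [:1:]" by simp
    with p0 show False by simp
  qed
  define v where "v = (\<lambda>i::nat. x ^ i)"
  define A where "A = (\<lambda>i j::nat. if i + 1 < m then (if j = i + 1 then 1 else 0) else - coeff p j)"
  have "\<forall>i<m. x * v i = (\<Sum>j<m. of_int (A i j) * v j)"
  proof (intro allI impI)
    fix i assume i: "i < m"
    show "x * v i = (\<Sum>j<m. of_int (A i j) * v j)"
    proof (cases "i + 1 < m")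
      case True
      then have "(\<Sum>j<m. of_int (A i j) * v j) = (\<Sum>j<m. if j = i + 1 then v j else 0)"
        unfolding A_def by (intro sum.cong) auto
      also have "\<dots> = v (i+1)" using True by (simp add: sum.delta)
      finally show ?thesis unfolding v_def by simp
    next
      case False
      then have im: "i + 1 = m" using i by simp
      have "0 = poly (of_int_poly p) x" using p0 by simp
      also have "\<dots> = (\<Sum>j\<le>m. of_int (coeff p j) * x ^ j)"
        unfolding poly_altdef m_def by (simp add: coeff_map_poly degree_map_poly)
      also have "\<dots> = (\<Sum>j<m. of_int (coeff p j) * x ^ j) + of_int (coeff p m) * x ^ m"
        by (simp only: lessThan_Suc_atMost[symmetric] sum.lessThan_Suc)
      also have "\<dots> = (\<Sum>j<m. of_int (coeff p j) * x ^ j) + x ^ m"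
        using p1 unfolding m_def by simp
      finally have "x ^ m = - (\<Sum>j<m. of_int (coeff p j) * x ^ j)"
        by (simp add: eq_neg_iff_add_eq_0 add.commute)
      moreover have "(\<Sum>j<m. of_int (A i j) * v j) = - (\<Sum>j<m. of_int (coeff p j) * x ^ j)"
        using False unfolding A_def v_def by (simp add: sum_negf)
      moreover have "x * v i = x ^ m" unfolding v_def using im by (metis power_Suc add.commute plus_1_eq_Suc)
      ultimately show ?thesis by simp
    qed
  qed
  moreover have "v 0 \<noteq> 0" unfolding v_def by simp
  ultimately show ?thesis unfolding stab_def using \<open>m \<noteq> 0\<close> by blast
qed

lemma sum_pairs:
  fixes f :: "nat \<Rightarrow> 'a::comm_monoid_add"
  shows "(\<Sum>k<m*l. f k) = (\<Sum>i<m. \<Sum>j<l. f (i*l + j))"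
proof -
  have "(\<Sum>k<m*l. f k) = (\<Sum>i<m. sum f {i*l..<i*l+l})"
    by (rule sum.nat_group[of f l m, symmetric])
  also have "\<dots> = (\<Sum>i<m. \<Sum>j<l. f (i*l + j))"
  proof (rule sum.cong[OF refl])
    fix i
    have "sum f {i*l..<i*l+l} = sum (\<lambda>j. f (j + i*l)) {0..<l}"
      using sum.shift_bounds_nat_ivl[of f 0 "i*l" l] by (simp add: add.commute)
    then show "sum f {i*l..<i*l+l} = (\<Sum>j<l. f (i*l + j))"
      by (simp add: lessThan_atLeast0 add.commute)
  qed
  finally show ?thesis .
qed

lemma stab_combine:
  assumes "stab x" "stab y"
  shows "stab (x * y) \<and> stab (x - y)"
proof -
  obtain m and v :: "nat \<Rightarrow> complex" and A :: "nat \<Rightarrow> nat \<Rightarrow> int" where nz1: "\<exists>i<m. v i \<noteq> 0" and eq1: "\<forall>i<m. x * v i = (\<Sum>j<m. of_int (A i j) * v j)"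
    using assms(1) unfolding stab_def by blast
  obtain l and u :: "nat \<Rightarrow> complex" and B :: "nat \<Rightarrow> nat \<Rightarrow> int" where nz2: "\<exists>i<l. u i \<noteq> 0" and eq2: "\<forall>i<l. y * u i = (\<Sum>j<l. of_int (B i j) * u j)"
    using assms(2) unfolding stab_def by blast
  define w where "w = (\<lambda>k. v (k div l) * u (k mod l))"
  obtain i0 j0 where i0: "i0 < m" "v i0 \<noteq> 0" and j0: "j0 < l" "u j0 \<noteq> 0" using nz1 nz2 by blast
  have lpos: "l > 0" using j0 by simp
  have k0: "i0 * l + j0 < m * l"
  proof -
    have "i0 * l + j0 < i0 * l + l" using j0 by simp
    also have "\<dots> = Suc i0 * l" by simp
    also have "\<dots> \<le> m * l" using i0 by (intro mult_right_mono) auto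
    finally show ?thesis .
  qed
  have wk0: "w (i0 * l + j0) \<noteq> 0" unfolding w_def using i0 j0 by simp
  have nz: "\<exists>k<m*l. w k \<noteq> 0" using k0 wk0 by blast
  have divmod: "k div l < m" "k mod l < l" if "k < m * l" for k
    using that lpos by (auto simp: less_mult_imp_div_less)
  have wsum: "(\<Sum>k'<m*l. g (k' div l) (k' mod l) * w k') = (\<Sum>i'<m. \<Sum>j'<l. g i' j' * v i' * u j')" for g
    by (subst sum_pairs) (simp add: w_def lpos mult.assoc)
  define C1 where "C1 = (\<lambda>k k'. A (k div l) (k' div l) * B (k mod l) (k' mod l))"
  define C2 where "C2 = (\<lambda>k k'. (if k mod l = k' mod l then A (k div l) (k' div l) else 0)
        - (if k div l = k' div l then B (k mod l) (k' mod l) else 0))"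
  have "\<forall>k<m*l. x * y * w k = (\<Sum>k'<m*l. of_int (C1 k k') * w k')"
  proof (intro allI impI)
    fix k assume k: "k < m * l"
    have "(\<Sum>k'<m*l. of_int (C1 k k') * w k') = (\<Sum>i'<m. \<Sum>j'<l. of_int (A (k div l) i') * of_int (B (k mod l) j') * v i' * u j')"
      unfolding C1_def using wsum[of "\<lambda>i' j'. of_int (A (k div l) i') * of_int (B (k mod l) j')"] by simp
    also have "\<dots> = (\<Sum>i'<m. \<Sum>j'<l. (of_int (A (k div l) i') * v i') * (of_int (B (k mod l) j') * u j'))"
      by (simp add: mult_ac)
    also have "\<dots> = (\<Sum>i'<m. of_int (A (k div l) i') * v i') * (\<Sum>j'<l. of_int (B (k mod l) j') * u j')"
      by (rule sum_product[symmetric])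
    also have "\<dots> = (x * v (k div l)) * (y * u (k mod l))" using eq1 eq2 divmod[OF k] by simp
    finally show "x * y * w k = (\<Sum>k'<m*l. of_int (C1 k k') * w k')" unfolding w_def by (simp add: mult_ac)
  qed
  hence s1: "stab (x * y)" unfolding stab_def using nz by blast
  have "\<forall>k<m*l. (x - y) * w k = (\<Sum>k'<m*l. of_int (C2 k k') * w k')"
  proof (intro allI impI)
    fix k assume k: "k < m * l"
    let ?i = "k div l" and ?j = "k mod l"
    define G where "G = (\<lambda>i' j'. (if ?j = j' then A ?i i' else 0) - (if ?i = i' then B ?j j' else 0))"
    have "(\<Sum>k'<m*l. of_int (C2 k k') * w k') = (\<Sum>i'<m. \<Sum>j'<l. of_int (G i' j') * v i' * u j')"
      using wsum[of "\<lambda>i' j'. of_int (G i' j')"] unfolding C2_def G_def by simp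
    also have "\<dots> = (\<Sum>i'<m. \<Sum>j'<l. (if ?j = j' then of_int (A ?i i') * v i' * u j' else 0)
        - (if ?i = i' then of_int (B ?j j') * v i' * u j' else 0))"
      by (intro sum.cong refl) (simp add: G_def left_diff_distrib)
    also have "\<dots> = (\<Sum>i'<m. \<Sum>j'<l. (if ?j = j' then of_int (A ?i i') * v i' * u j' else 0))
        - (\<Sum>i'<m. \<Sum>j'<l. (if ?i = i' then of_int (B ?j j') * v i' * u j' else 0))"
      by (simp only: sum_subtractf)
    also have "(\<Sum>i'<m. \<Sum>j'<l. (if ?j = j' then of_int (A ?i i') * v i' * u j' else 0))
       = (\<Sum>i'<m. of_int (A ?i i') * v i' * u ?j)"
      using divmod[OF k] by (intro sum.cong refl) (simp add: sum.delta)
    also have "(\<Sum>i'<m. \<Sum>j'<l. (if ?i = i' then of_int (B ?j j') * v i' * u j' else 0))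
       = (\<Sum>j'<l. \<Sum>i'<m. (if ?i = i' then of_int (B ?j j') * v i' * u j' else 0))"
      by (rule sum.swap)
    also have "\<dots> = (\<Sum>j'<l. of_int (B ?j j') * v ?i * u j')"
      using divmod[OF k] by (intro sum.cong refl) (simp add: sum.delta)
    also have "(\<Sum>i'<m. of_int (A ?i i') * v i' * u ?j) - (\<Sum>j'<l. of_int (B ?j j') * v ?i * u j')
       = (\<Sum>i'<m. of_int (A ?i i') * v i') * u ?j - v ?i * (\<Sum>j'<l. of_int (B ?j j') * u j')"
      by (simp add: sum_distrib_left sum_distrib_right mult_ac)
    also have "\<dots> = (x * v ?i) * u ?j - v ?i * (y * u ?j)" using eq1 eq2 divmod[OF k] by simp
    finally show "(x - y) * w k = (\<Sum>k'<m*l. of_int (C2 k k') * w k')" unfolding w_def by (simp add: algebra_simps)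
  qed
  hence "stab (x - y)" unfolding stab_def using nz by blast
  with s1 show ?thesis by blast
qed

lemma algint_mult: "algebraic_int (x::complex) \<Longrightarrow> algebraic_int y \<Longrightarrow> algebraic_int (x * y)"
  using stab_combine algint_imp_stab stab_imp_algint by blast
lemma algint_diff: "algebraic_int (x::complex) \<Longrightarrow> algebraic_int y \<Longrightarrow> algebraic_int (x - y)"
  using stab_combine algint_imp_stab stab_imp_algint by blast
lemma algint_add: "algebraic_int (x::complex) \<Longrightarrow> algebraic_int y \<Longrightarrow> algebraic_int (x + y)"
  using algint_diff[of x "-y"] by auto
lemma algint_sum: "(\<And>i. i \<in> I \<Longrightarrow> algebraic_int (f i :: complex)) \<Longrightarrow> algebraic_int (sum f I)"
  by (induction I rule: infinite_finite_induct) (auto intro: algint_add)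
lemma algint_prod: "(\<And>i. i \<in> I \<Longrightarrow> algebraic_int (f i :: complex)) \<Longrightarrow> algebraic_int (prod f I)"
  by (induction I rule: infinite_finite_induct) (auto intro: algint_mult)

lemma algint_coeff_prodlist:
  "(\<forall>a\<in>set as. algebraic_int (a::complex)) \<Longrightarrow> algebraic_int (coeff (\<Prod>a\<leftarrow>as. [:-a,1:]) i)"
proof (induction as arbitrary: i)
  case Nil
  then show ?case by (cases i) auto
next
  case (Cons b as)
  let ?q = "(\<Prod>a\<leftarrow>as. [:-a,1:])"
  have e: "(\<Prod>a\<leftarrow>b#as. [:-a,1:]) = Polynomial.smult (-b) ?q + pCons 0 ?q"
    by (simp add: mult_pCons_left)
  have ib: "algebraic_int (-b)" "algebraic_int b" using Cons.prems by auto
  have iq: "algebraic_int (coeff ?q j)" for j using Cons by auto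
  show ?case unfolding e
    by (cases i) (auto intro!: algint_add algint_mult algint_diff ib iq)
qed

lemma split_monic:
  fixes p :: "complex poly"
  assumes "lead_coeff p = 1"
  shows "\<exists>as. p = (\<Prod>a\<leftarrow>as. [:-a,1:]) \<and> length as = degree p"
  using fundamental_theorem_algebra_factorized[of p] assms by auto

lemma poly_prodlist_zero:
  "poly (\<Prod>a\<leftarrow>as. [:-a,1:]) (z::complex) = 0 \<longleftrightarrow> z \<in> set as"
  by (induction as) auto

lemma f_poly_map:
  "(of_int_poly (f_poly n a c) :: 'b::{comm_ring_1,ring_char_0} poly)
     = (\<Prod>i<n-1. [:- of_int (a i), 1:]) * [:- of_int c, 1:] - 1"
proof -
  have h: "of_int_poly [:x, y:] = ([:of_int x, of_int y:] :: 'b poly)" for x y :: int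
    by (rule poly_eqI) (simp add: coeff_map_poly coeff_pCons split: nat.split)
  show ?thesis unfolding f_poly_def
    by (simp only: of_int_poly_hom.hom_prod of_int_poly_hom.hom_mult of_int_poly_hom.hom_minus h
       of_int_minus of_int_1 of_int_poly_hom.hom_one)
qed

lemma f_poly_eval:
  "poly (of_int_poly (f_poly n a c) :: 'b::{comm_ring_1,ring_char_0} poly) x
     = (\<Prod>i<n-1. (x - of_int (a i))) * (x - of_int c) - 1"
  unfolding f_poly_map by (simp add: poly_prod algebra_simps)

lemma f_poly_deg:
  assumes "n \<ge> 1"
  shows "degree (f_poly n a c) = n \<and> lead_coeff (f_poly n a c) = 1"
proof -
  define P0 :: "int poly" where "P0 = (\<Prod>i<n-1. [:- a i, 1:]) * [:- c, 1:]"
  have m1: "monic (\<Prod>i<n-1. [:- a i, 1:])" by (rule monic_prod) simp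
  have d1: "degree (\<Prod>i<n-1. [:- a i, 1:]) = n - 1"
    by (subst degree_prod_eq_sum_degree) auto
  have dP: "degree P0 = n" unfolding P0_def using m1 d1 assms
    by (subst degree_mult_eq) auto
  have "lead_coeff P0 = lead_coeff (\<Prod>i<n-1. [:- a i, 1:]) * lead_coeff [:- c, 1:]"
    unfolding P0_def by (rule lead_coeff_mult)
  hence lP: "lead_coeff P0 = 1" using m1 by simp
  have fe: "f_poly n a c = P0 + (-1)" unfolding f_poly_def P0_def by simp
  have "degree (-1 :: int poly) < degree P0" using dP assms by simp
  hence d: "degree (P0 + (-1)) = n" using dP by (subst degree_add_eq_left) auto
  have "coeff (P0 + (-1)) n = 1" using lP dP assms by simp
  thus ?thesis using d fe by simp
qed

definition ev :: "rat poly \<Rightarrow> complex \<Rightarrow> complex" where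
  "ev P x = poly (map_poly of_rat P) x"

lemma of_rat_poly_mult: "map_poly (of_rat::rat\<Rightarrow>'a::field_char_0) (p*q) = map_poly of_rat p * map_poly of_rat q"
proof -
  interpret h: map_poly_comm_ring_hom "of_rat :: rat \<Rightarrow> 'a" ..
  show ?thesis by (rule h.hom_mult)
qed

lemma ev_add[simp]: "ev (P + Q) x = ev P x + ev Q x" unfolding ev_def by (simp add: of_rat_hom.map_poly_hom_add)
lemma ev_mult[simp]: "ev (P * Q) x = ev P x * ev Q x" unfolding ev_def by (simp add: of_rat_poly_mult)
lemma ev_diff[simp]: "ev (P - Q) x = ev P x - ev Q x"
  using ev_add[of "P - Q" Q x] by simp
lemma ev_const[simp]: "ev [:q:] x = of_rat q" unfolding ev_def by (simp add: of_rat_hom.map_poly_pCons_hom)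
lemma ev_one[simp]: "ev 1 x = 1" unfolding ev_def by simp
lemma ev_zero[simp]: "ev 0 x = 0" unfolding ev_def by simp
lemma ev_X[simp]: "ev [:0,1:] x = x" unfolding ev_def by simp
lemma ev_pcompose: "ev (P \<circ>\<^sub>p Q) x = ev P (ev Q x)"
  unfolding ev_def by (simp add: of_rat_hom.map_poly_pcompose poly_pcompose)
lemma ev_dvd: "P dvd Q \<Longrightarrow> ev P x = 0 \<Longrightarrow> ev Q x = 0"
  by (auto elim!: dvdE)

definition fQ :: "nat \<Rightarrow> (nat \<Rightarrow> int) \<Rightarrow> int \<Rightarrow> rat poly" where
  "fQ n a c = of_int_poly (f_poly n a c)"

lemma ev_fQ: "ev (fQ n a c) x = poly (of_int_poly (f_poly n a c)) x"
  unfolding ev_def fQ_def by (simp add: map_poly_map_poly o_def)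

lemma root_algint:
  assumes "n \<ge> 1" "poly (of_int_poly (f_poly n a c)) (z::complex) = 0"
  shows "algebraic_int z"
proof -
  have "degree (f_poly n a c) = n" "lead_coeff (f_poly n a c) = 1" using f_poly_deg[of n a c, OF assms(1)] by auto
  thus ?thesis using assms(2) unfolding algebraic_int_altdef_ipoly by blast
qed

lemma fQ_deg: assumes "n \<ge> 1" shows "degree (fQ n a c) = n \<and> lead_coeff (fQ n a c) = 1"
proof -
  have d: "degree (f_poly n a c) = n" and l: "lead_coeff (f_poly n a c) = 1" using f_poly_deg[of n a c, OF assms] by auto
  have "degree (fQ n a c) = n" unfolding fQ_def using d by simp
  moreover have "coeff (fQ n a c) n = 1" unfolding fQ_def using d l by (simp add: coeff_map_poly)
  ultimately show ?thesis by simp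
qed

lemma ratint_of_rat: "of_rat (q::rat) \<in> (\<int> :: complex set) \<Longrightarrow> q \<in> \<int>"
  by (metis Ints_cases Ints_of_int of_rat_of_int_eq of_rat_eq_iff)

lemma monic_divisor_int:
  assumes n: "n \<ge> 1" and G1: "lead_coeff G = 1" and Gd: "G dvd fQ n a c"
  shows "coeff G i \<in> \<int>"
proof -
  define Gc where "Gc = map_poly (of_rat :: rat \<Rightarrow> complex) G"
  have "lead_coeff Gc = 1" unfolding Gc_def using G1 by simp
  then obtain as where as: "Gc = (\<Prod>a\<leftarrow>as. [:-a,1:])" using split_monic by blast
  have "\<forall>t\<in>set as. algebraic_int t"
  proof
    fix t assume "t \<in> set as"
    hence "poly Gc t = 0" using as poly_prodlist_zero by simp
    hence "ev G t = 0" unfolding ev_def Gc_def .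
    hence "ev (fQ n a c) t = 0" using Gd by (auto elim!: dvdE)
    thus "algebraic_int t" using root_algint[OF n] unfolding ev_fQ by blast
  qed
  hence "algebraic_int (coeff Gc i)" using as algint_coeff_prodlist by simp
  moreover have "coeff Gc i = of_rat (coeff G i)" unfolding Gc_def by (simp add: coeff_map_poly)
  ultimately have "of_rat (coeff G i) \<in> (\<int> :: complex set)"
    using rational_algebraic_int_is_int by (metis Rats_of_rat)
  thus ?thesis by (rule ratint_of_rat)
qed

lemma poly_Ints: "(\<And>i. coeff P i \<in> \<int>) \<Longrightarrow> (t::'a::{comm_ring_1}) \<in> \<int> \<Longrightarrow> poly P t \<in> \<int>"
  unfolding poly_altdef by (intro Ints_sum Ints_mult Ints_power) auto

lemma int_prod_neg1: "(x::rat) \<in> \<int> \<Longrightarrow> y \<in> \<int> \<Longrightarrow> x * y = -1 \<Longrightarrow> x + y = 0"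
proof -
  assume "x \<in> \<int>" "y \<in> \<int>" "x * y = -1"
  then obtain i j where ij: "x = of_int i" "y = of_int j" by (metis Ints_cases)
  with \<open>x * y = -1\<close> have "i * j = -1" by (metis of_int_eq_iff of_int_minus of_int_1 of_int_mult)
  hence "i * (-j) = 1" by simp
  hence "i = 1 \<and> -j = 1 \<or> i = -1 \<and> -j = -1" by (simp only: zmult_eq_1_iff)
  thus "x + y = 0" using ij by auto
qed

lemma f_at_points:
  assumes "t \<in> a ` {..<n-1} \<union> {c}"
  shows "poly (of_int_poly (f_poly n a c) :: 'b::{comm_ring_1,ring_char_0} poly) (of_int t) = -1"
proof -
  have "(\<Prod>i<n-1. (of_int t - of_int (a i) :: 'b)) * (of_int t - of_int c) = 0"
  proof (cases "t = c")
    case False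
    then obtain i where i: "i < n - 1" "t = a i" using assms by auto
    hence "(\<Prod>i<n-1. (of_int t - of_int (a i) :: 'b)) = 0"
      by (intro prod_zero) auto
    thus ?thesis by simp
  qed simp
  thus ?thesis unfolding f_poly_eval by simp
qed

lemma nofactor:
  assumes n: "n \<ge> 1" and inj: "inj_on a {..<n-1}" and c: "c \<notin> a ` {..<n-1}"
    and G1: "lead_coeff G = 1" and Gd: "G dvd fQ n a c" and d0: "0 < degree G" and dn: "degree G < n"
  shows False
proof -
  obtain H where fe: "fQ n a c = G * H" using Gd by (auto elim!: dvdE)
  have fd: "degree (fQ n a c) = n" "lead_coeff (fQ n a c) = 1" using fQ_deg[of n a c, OF n] by auto
  have Hnz: "H \<noteq> 0" using fe fd by auto
  have Gnz: "G \<noteq> 0" using G1 by auto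
  have H1: "lead_coeff H = 1" using fd(2) G1 unfolding fe by (simp add: lead_coeff_mult)
  have dH: "degree H = n - degree G" using fd(1) unfolding fe using Gnz Hnz by (simp add: degree_mult_eq)
  have Hd: "H dvd fQ n a c" using fe by simp
  have Gi: "coeff G i \<in> \<int>" for i using monic_divisor_int[OF n G1 Gd] .
  have Hi: "coeff H i \<in> \<int>" for i using monic_divisor_int[OF n H1 Hd] .
  define T where "T = (of_int :: int \<Rightarrow> rat) ` (a ` {..<n-1} \<union> {c})"
  have Troots: "T \<subseteq> {x. poly (G + H) x = 0}"
  proof
    fix x assume "x \<in> T"
    then obtain t where t: "t \<in> a ` {..<n-1} \<union> {c}" "x = of_int t" unfolding T_def by auto
    have "poly (fQ n a c) x = -1" unfolding fQ_def t(2) by (rule f_at_points[OF t(1)])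
    hence "poly G x * poly H x = -1" unfolding fe by simp
    moreover have "poly G x \<in> \<int>" "poly H x \<in> \<int>" using Gi Hi t(2) by (auto intro: poly_Ints)
    ultimately have "poly G x + poly H x = 0" using int_prod_neg1 by blast
    thus "x \<in> {x. poly (G + H) x = 0}" by simp
  qed
  have GH: "G + H \<noteq> 0"
  proof
    assume "G + H = 0"
    hence "H = - G" by (simp add: eq_neg_iff_add_eq_0 add.commute)
    hence "lead_coeff H = - lead_coeff G" by simp
    with G1 H1 show False by simp
  qed
  have "degree (G + H) < n"
    using degree_add_le_max[of G H] dn dH d0 by linarith
  have cardT: "card T = n"
  proof -
    have "card (a ` {..<n-1} \<union> {c}) = n" using inj c n by (simp add: card_image)
    moreover have "inj_on (of_int :: int \<Rightarrow> rat) (a ` {..<n-1} \<union> {c})" by (auto intro: inj_onI)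
    ultimately show ?thesis unfolding T_def by (metis card_image)
  qed
  have "card T \<le> card {x. poly (G + H) x = 0}"
    using Troots poly_roots_finite[OF GH] by (rule card_mono[rotated])
  also have "\<dots> \<le> degree (G + H)" by (rule card_poly_roots_bound[OF GH])
  finally show False using cardT \<open>degree (G + H) < n\<close> by simp
qed

lemma gcd_cases:
  assumes n: "n \<ge> 1" and inj: "inj_on a {..<n-1}" and c: "c \<notin> a ` {..<n-1}"
  shows "gcd P (fQ n a c) = 1 \<or> gcd P (fQ n a c) = fQ n a c"
proof -
  let ?f = "fQ n a c" and ?G = "gcd P (fQ n a c)"
  have fd: "degree ?f = n" "lead_coeff ?f = 1" using fQ_deg[of n a c, OF n] by auto
  have fnz: "?f \<noteq> 0" using fd n by auto
  have G1: "lead_coeff ?G = 1" using poly_gcd_monic[of P ?f] fnz by auto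
  have Gd: "?G dvd ?f" by simp
  show ?thesis
  proof (cases "degree ?G = 0")
    case True
    then obtain g where "?G = [:g:]" by (rule degree_eq_zeroE)
    with G1 have "?G = 1" by (simp add: one_pCons)
    thus ?thesis ..
  next
    case False
    have "degree ?G \<le> n" using dvd_imp_degree_le[OF Gd fnz] fd by simp
    moreover have "\<not> degree ?G < n" using nofactor[OF n inj c G1 Gd] False by auto
    ultimately have dG: "degree ?G = n" by simp
    obtain K where K: "?f = ?G * K" using Gd by (rule dvdE)
    have Knz: "K \<noteq> 0" using K fnz by auto
    have Gnz: "?G \<noteq> 0" using G1 by auto
    have "degree K = 0" using K fd dG Gnz Knz by (metis add_cancel_right_right degree_mult_eq)
    then obtain k where k: "K = [:k:]" by (rule degree_eq_zeroE)
    have "lead_coeff ?f = lead_coeff ?G * lead_coeff K" using K by (metis lead_coeff_mult)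
    hence "k = 1" using fd G1 k by simp
    hence "?G = ?f" using K k by (simp add: one_pCons[symmetric])
    thus ?thesis ..
  qed
qed

lemma minpoly:
  assumes n: "n \<ge> 1" and inj: "inj_on a {..<n-1}" and c: "c \<notin> a ` {..<n-1}"
    and r: "ev (fQ n a c) \<alpha> = 0" and P: "ev P \<alpha> = 0"
  shows "fQ n a c dvd P"
proof -
  let ?f = "fQ n a c"
  have b: "fst (bezout_coefficients P ?f) * P + snd (bezout_coefficients P ?f) * ?f = gcd P ?f"
    by (rule bezout_coefficients_fst_snd)
  from gcd_cases[OF n inj c, of P] show ?thesis
  proof
    assume "gcd P ?f = 1"
    with b have "ev (fst (bezout_coefficients P ?f) * P + snd (bezout_coefficients P ?f) * ?f) \<alpha> = ev 1 \<alpha>"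
      by simp
    with r P show ?thesis by simp
  next
    assume "gcd P ?f = ?f"
    thus ?thesis by (metis gcd_dvd1)
  qed
qed

lemma inverse_ev:
  assumes n: "n \<ge> 1" and inj: "inj_on a {..<n-1}" and c: "c \<notin> a ` {..<n-1}"
    and r: "ev (fQ n a c) \<alpha> = 0" and P: "ev P \<alpha> \<noteq> 0"
  shows "\<exists>Q. ev Q \<alpha> * ev P \<alpha> = 1"
proof -
  let ?f = "fQ n a c"
  have b: "fst (bezout_coefficients P ?f) * P + snd (bezout_coefficients P ?f) * ?f = gcd P ?f"
    by (rule bezout_coefficients_fst_snd)
  from gcd_cases[OF n inj c, of P] show ?thesis
  proof
    assume "gcd P ?f = 1"
    with b have "ev (fst (bezout_coefficients P ?f) * P + snd (bezout_coefficients P ?f) * ?f) \<alpha> = ev 1 \<alpha>"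
      by simp
    with r show ?thesis by auto
  next
    assume "gcd P ?f = ?f"
    hence "?f dvd P" by (metis gcd_dvd1)
    with r P have False using ev_dvd by blast
    thus ?thesis ..
  qed
qed

definition subfld :: "complex set \<Rightarrow> bool" where
  "subfld F \<longleftrightarrow> 0 \<in> F \<and> 1 \<in> F \<and> (\<forall>x\<in>F. \<forall>y\<in>F. x + y \<in> F \<and> x * y \<in> F) \<and> (\<forall>x\<in>F. - x \<in> F) \<and>
      (\<forall>x\<in>F. x \<noteq> 0 \<longrightarrow> inverse x \<in> F)"

lemma gf_subfld: "subfld (gen_field \<alpha>)" and gf_mem: "\<alpha> \<in> gen_field \<alpha>"
  unfolding subfld_def gen_field_def by auto

lemma gf_min: "subfld F \<Longrightarrow> \<alpha> \<in> F \<Longrightarrow> gen_field \<alpha> \<subseteq> F"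
  unfolding subfld_def gen_field_def by blast

lemma subfld_nat: "subfld F \<Longrightarrow> of_nat k \<in> F"
  by (induction k) (auto simp: subfld_def)

lemma subfld_int: "subfld F \<Longrightarrow> of_int k \<in> F"
proof (cases "k \<ge> 0")
  case True
  assume "subfld F"
  then show ?thesis using subfld_nat[of F "nat k"] True by simp
next
  case False
  assume F: "subfld F"
  have "of_nat (nat (-k)) \<in> F" using subfld_nat[OF F] .
  hence "- of_nat (nat (-k)) \<in> F" using F unfolding subfld_def by blast
  thus ?thesis using False by simp
qed

lemma subfld_rat: assumes F: "subfld F" shows "of_rat q \<in> F"
proof -
  obtain p r where q: "q = Rat.Fract p r" and r: "r > 0" by (cases q) auto
  have "of_rat q = of_int p * inverse (of_int r :: complex)" unfolding q using r by (simp add: of_rat_rat divide_inverse)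
  moreover have "of_int p \<in> F" "inverse (of_int r :: complex) \<in> F"
    using subfld_int[OF F] F r unfolding subfld_def by auto
  ultimately show ?thesis using F unfolding subfld_def by auto
qed

lemma ev_pCons: "ev (pCons q P) x = of_rat q + x * ev P x"
  unfolding ev_def by (simp add: of_rat_hom.map_poly_pCons_hom)

lemma subfld_ev: assumes F: "subfld F" and x: "x \<in> F" shows "ev P x \<in> F"
proof (induction P rule: pCons_induct)
  case 0 then show ?case using F unfolding subfld_def by simp
next
  case (pCons q P)
  then show ?case unfolding ev_pCons using F x subfld_rat[OF F] unfolding subfld_def by auto
qed

lemma ev_minus[simp]: "ev (- P) x = - ev P x" using ev_diff[of 0 P x] by simp

lemma repr:
  assumes n: "n \<ge> 1" and inj: "inj_on a {..<n-1}" and c: "c \<notin> a ` {..<n-1}"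
    and r: "ev (fQ n a c) \<alpha> = 0"
  shows "gen_field \<alpha> \<subseteq> {ev P \<alpha> | P. True}"
proof (rule gf_min)
  show "\<alpha> \<in> {ev P \<alpha> | P. True}" by (rule CollectI, rule exI[of _ "[:0,1:]"]) simp
  show "subfld {ev P \<alpha> | P. True}"
    unfolding subfld_def
  proof (intro conjI ballI impI)
    show "0 \<in> {ev P \<alpha> | P. True}" by (rule CollectI, rule exI[of _ 0]) simp
    show "1 \<in> {ev P \<alpha> | P. True}" by (rule CollectI, rule exI[of _ 1]) simp
    fix x y assume x: "x \<in> {ev P \<alpha> | P. True}"
    then obtain P where P: "x = ev P \<alpha>" by auto
    show "- x \<in> {ev P \<alpha> | P. True}" using P by (intro CollectI exI[of _ "- P"]) simp
    {
      assume "x \<noteq> 0"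
      then obtain Q where "ev Q \<alpha> * ev P \<alpha> = 1" using inverse_ev[OF n inj c r] P by blast
      hence "inverse x = ev Q \<alpha>" using P by (simp add: inverse_unique mult.commute)
      thus "inverse x \<in> {ev P \<alpha> | P. True}" by blast
    }
    assume "y \<in> {ev P \<alpha> | P. True}"
    then obtain Q where Q: "y = ev Q \<alpha>" by auto
    show "x + y \<in> {ev P \<alpha> | P. True}" using P Q by (intro CollectI exI[of _ "P + Q"]) simp
    show "x * y \<in> {ev P \<alpha> | P. True}" using P Q by (intro CollectI exI[of _ "P * Q"]) simp
  qed
qed

definition ishom :: "complex set \<Rightarrow> (complex \<Rightarrow> complex) \<Rightarrow> bool" where
  "ishom F \<phi> \<longleftrightarrow> \<phi> 1 = 1 \<and> (\<forall>x\<in>F. \<forall>y\<in>F. \<phi> (x + y) = \<phi> x + \<phi> y \<and> \<phi> (x * y) = \<phi> x * \<phi> y)"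

lemma hom_basic:
  assumes F: "subfld F" and h: "ishom F \<phi>"
  shows "\<phi> 0 = 0" "x \<in> F \<Longrightarrow> \<phi> (- x) = - \<phi> x"
proof -
  have "\<phi> (0 + 0) = \<phi> 0 + \<phi> 0" using F h unfolding subfld_def ishom_def by blast
  thus "\<phi> 0 = 0" by simp
  assume x: "x \<in> F"
  have "\<phi> (x + - x) = \<phi> x + \<phi> (- x)" using F h x unfolding subfld_def ishom_def by blast
  with \<open>\<phi> 0 = 0\<close> show "\<phi> (- x) = - \<phi> x" by (simp add: eq_neg_iff_add_eq_0 add.commute)
qed

lemma hom_nat: assumes F: "subfld F" and h: "ishom F \<phi>" shows "\<phi> (of_nat k) = of_nat k"
proof (induction k)
  case 0 then show ?case using hom_basic[OF F h] by simp
next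
  case (Suc k)
  have "\<phi> (1 + of_nat k) = \<phi> 1 + \<phi> (of_nat k)"
    using F h subfld_nat[OF F, of k] unfolding subfld_def ishom_def by blast
  then show ?case using Suc h unfolding ishom_def by simp
qed

lemma hom_int: assumes F: "subfld F" and h: "ishom F \<phi>" shows "\<phi> (of_int k) = of_int k"
proof (cases "k \<ge> 0")
  case True
  then show ?thesis using hom_nat[OF F h, of "nat k"] by simp
next
  case False
  have "\<phi> (- of_nat (nat (-k))) = - \<phi> (of_nat (nat (-k)))"
    using hom_basic(2)[OF F h subfld_nat[OF F]] .
  thus ?thesis using False hom_nat[OF F h, of "nat (-k)"] by simp
qed

lemma hom_rat: assumes F: "subfld F" and h: "ishom F \<phi>" shows "\<phi> (of_rat q) = of_rat q"
proof -
  obtain p r where q: "q = Rat.Fract p r" and r: "r > 0" by (cases q) auto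
  let ?r = "of_int r :: complex"
  have rF: "?r \<in> F" "inverse ?r \<in> F" "of_int p \<in> F"
    using subfld_int[OF F] F r unfolding subfld_def by auto
  have "\<phi> (?r * inverse ?r) = \<phi> ?r * \<phi> (inverse ?r)" using h rF unfolding ishom_def by blast
  hence "1 = ?r * \<phi> (inverse ?r)" using r h hom_int[OF F h] unfolding ishom_def by simp
  hence i: "\<phi> (inverse ?r) = inverse ?r" using r by (simp add: field_simps)
  have "of_rat q = of_int p * inverse ?r" unfolding q using r by (simp add: of_rat_rat divide_inverse)
  moreover have "\<phi> (of_int p * inverse ?r) = \<phi> (of_int p) * \<phi> (inverse ?r)" using h rF unfolding ishom_def by blast
  ultimately show ?thesis using i hom_int[OF F h] by simp
qed

lemma hom_ev: assumes F: "subfld F" and h: "ishom F \<phi>" and x: "x \<in> F"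
  shows "\<phi> (ev P x) = ev P (\<phi> x)"
proof (induction P rule: pCons_induct)
  case 0 then show ?case using hom_basic[OF F h] by simp
next
  case (pCons q P)
  have m: "x * ev P x \<in> F" "of_rat q \<in> F" "ev P x \<in> F"
    using F x subfld_ev[OF F x, of P] subfld_rat[OF F] unfolding subfld_def by auto
  have "\<phi> (of_rat q + x * ev P x) = \<phi> (of_rat q) + \<phi> (x * ev P x)" using h m unfolding ishom_def by blast
  also have "\<phi> (x * ev P x) = \<phi> x * \<phi> (ev P x)" using h m x unfolding ishom_def by blast
  finally show ?case unfolding ev_pCons using pCons hom_rat[OF F h] by simp
qed

lemma transfer:
  assumes n: "n \<ge> 1" and inj: "inj_on a {..<n-1}"
    and c: "c \<notin> a ` {..<n-1}" and b: "b \<notin> a ` {..<n-1}"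
    and rx: "ev (fQ n a c) \<xi> = 0" and rt: "ev (fQ n a b) \<theta> = 0"
    and i1: "fields_iso (gen_field \<xi>) K" and i2: "fields_iso (gen_field \<theta>) K"
  shows "\<exists>E R. ev (fQ n a c) (ev E \<theta>) = 0 \<and> ev R (ev E \<theta>) = \<theta>"
proof -
  obtain \<phi>1 where b1: "bij_betw \<phi>1 (gen_field \<xi>) K" and h1: "ishom (gen_field \<xi>) \<phi>1"
    using i1 unfolding fields_iso_def ishom_def by blast
  obtain \<phi>2 where b2: "bij_betw \<phi>2 (gen_field \<theta>) K" and h2: "ishom (gen_field \<theta>) \<phi>2"
    using i2 unfolding fields_iso_def ishom_def by blast
  have F1: "subfld (gen_field \<xi>)" and F2: "subfld (gen_field \<theta>)" by (rule gf_subfld)+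
  have inj2: "inj_on \<phi>2 (gen_field \<theta>)" using b2 by (rule bij_betw_imp_inj_on)
  have "\<phi>1 \<xi> \<in> K" using b1 gf_mem bij_betwE by blast
  then obtain \<eta> where \<eta>: "\<eta> \<in> gen_field \<theta>" "\<phi>2 \<eta> = \<phi>1 \<xi>" using b2 by (metis bij_betw_iff_bijections)
  have "\<phi>2 (ev (fQ n a c) \<eta>) = ev (fQ n a c) (\<phi>1 \<xi>)" using hom_ev[OF F2 h2 \<eta>(1)] \<eta>(2) by simp
  also have "\<dots> = \<phi>1 (ev (fQ n a c) \<xi>)" using hom_ev[OF F1 h1 gf_mem] by simp
  also have "\<dots> = \<phi>2 0" using rx hom_basic(1)[OF F1 h1] hom_basic(1)[OF F2 h2] by simp
  finally have "ev (fQ n a c) \<eta> = 0"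
    using inj2 subfld_ev[OF F2 \<eta>(1)] F2 unfolding subfld_def inj_on_def by blast
  have "\<phi>2 \<theta> \<in> K" using b2 gf_mem bij_betwE by blast
  then obtain y where y: "y \<in> gen_field \<xi>" "\<phi>1 y = \<phi>2 \<theta>" using b1 by (metis bij_betw_iff_bijections)
  obtain R where R: "y = ev R \<xi>" using repr[OF n inj c rx] y(1) by auto
  have "\<phi>2 (ev R \<eta>) = ev R (\<phi>1 \<xi>)" using hom_ev[OF F2 h2 \<eta>(1)] \<eta>(2) by simp
  also have "\<dots> = \<phi>1 y" using hom_ev[OF F1 h1 gf_mem] R by simp
  finally have "ev R \<eta> = \<theta>"
    using inj2 subfld_ev[OF F2 \<eta>(1)] gf_mem y(2) unfolding inj_on_def by metis
  obtain E where E: "\<eta> = ev E \<theta>" using repr[OF n inj b rt] \<eta>(1) by auto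
  have "ev (fQ n a c) (ev E \<theta>) = 0 \<and> ev R (ev E \<theta>) = \<theta>"
    using \<open>ev (fQ n a c) \<eta> = 0\<close> \<open>ev R \<eta> = \<theta>\<close> E by simp
  thus ?thesis by blast
qed

definition Msum :: "nat \<Rightarrow> (nat \<Rightarrow> int) \<Rightarrow> real" where
  "Msum n a = (\<Sum>i<n-1. \<bar>real_of_int (a i)\<bar>)"

definition large :: "nat \<Rightarrow> int \<Rightarrow> complex \<Rightarrow> bool" where
  "large n c z \<longleftrightarrow> cmod (z - of_int c) * (\<bar>real_of_int c\<bar> / 2) ^ (n-1) \<le> 1"

definition near :: "nat \<Rightarrow> (nat \<Rightarrow> int) \<Rightarrow> int \<Rightarrow> complex \<Rightarrow> nat \<Rightarrow> bool" where
  "near n a c z i \<longleftrightarrow> i < n - 1 \<and> cmod (z - of_int (a i)) * \<bar>real_of_int c\<bar> \<le> 2 ^ (n-1)"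

lemma Msum_ge: "i < n - 1 \<Longrightarrow> \<bar>real_of_int (a i)\<bar> \<le> Msum n a"
  unfolding Msum_def by (rule member_le_sum) auto

lemma Msum_nonneg: "Msum n a \<ge> 0" unfolding Msum_def by (simp add: sum_nonneg)

lemma dist_ints: "inj_on a {..<n-1} \<Longrightarrow> i < n-1 \<Longrightarrow> j < n-1 \<Longrightarrow> i \<noteq> j \<Longrightarrow>
   cmod (of_int (a i) - of_int (a j)) \<ge> 1"
proof -
  assume "inj_on a {..<n-1}" "i < n-1" "j < n-1" "i \<noteq> j"
  hence "a i \<noteq> a j" unfolding inj_on_def by auto
  hence "\<bar>a i - a j\<bar> \<ge> 1" by linarith
  hence "\<bar>real_of_int (a i - a j)\<bar> \<ge> 1" by linarith
  moreover have "cmod (of_int (a i) - of_int (a j)) = \<bar>real_of_int (a i - a j)\<bar>"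
    using norm_of_int[of "a i - a j"] by simp
  ultimately show ?thesis by simp
qed

lemma root_class:
  fixes z :: complex
  assumes n3: "n \<ge> 3" and inj: "inj_on a {..<n-1}"
    and cB: "\<bar>real_of_int c\<bar> \<ge> 2 ^ n + 2 * Msum n a + 2"
    and root: "poly (of_int_poly (f_poly n a c)) z = 0"
  shows "(large n c z \<and> cmod z \<ge> \<bar>real_of_int c\<bar> - 1 \<and> cmod z \<le> \<bar>real_of_int c\<bar> + 1) \<or>
         (\<exists>i. near n a c z i \<and> cmod z \<le> Msum n a + 1/2)"
proof -
  define C where "C = \<bar>real_of_int c\<bar>"
  define M where "M = Msum n a"
  define d where "d = cmod (z - of_int c)"
  have M0: "M \<ge> 0" unfolding M_def by (rule Msum_nonneg)
  have aM: "cmod (of_int (a i) :: complex) \<le> M" if "i < n - 1" for i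
    unfolding M_def using Msum_ge[OF that] by (metis norm_of_int)
  have cC: "cmod (of_int c :: complex) = C" unfolding C_def by (metis norm_of_int)
  have C2n: "C \<ge> 2 ^ n + 2 * M + 2" using cB unfolding C_def M_def .
  have g: "(\<Prod>i<n-1. (z - of_int (a i))) * (z - of_int c) = 1"
    using root unfolding f_poly_eval by simp
  hence "cmod ((\<Prod>i<n-1. (z - of_int (a i))) * (z - of_int c)) = 1" by simp
  hence gn: "(\<Prod>i<n-1. cmod (z - of_int (a i))) * d = 1"
    unfolding d_def by (simp add: norm_mult prod_norm)
  have d0: "d \<ge> 0" unfolding d_def by simp
  show ?thesis
  proof (cases "\<forall>i<n-1. cmod (z - of_int (a i)) \<ge> 1/2")
    case True
    have "(1/2::real) ^ (n-1) \<le> (\<Prod>i<n-1. cmod (z - of_int (a i)))"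
      using prod_mono[of "{..<n-1}" "\<lambda>_. 1/2::real" "\<lambda>i. cmod (z - of_int (a i))"] True by simp
    hence "(1/2::real) ^ (n-1) * d \<le> (\<Prod>i<n-1. cmod (z - of_int (a i))) * d" using d0 by (rule mult_right_mono)
    hence "(1/2::real) ^ (n-1) * d \<le> 1" using gn by simp
    hence d2: "d \<le> 2 ^ (n-1)" by (simp add: field_simps power_one_over)
    have p2: "2 * (2::real) ^ (n-1) = 2 ^ n" using n3 by (cases n) auto
    have "cmod (of_int c :: complex) \<le> cmod z + d" using norm_triangle_ineq4[of z "z - of_int c"] unfolding d_def by simp
    hence zc: "cmod z \<ge> C - d" using cC by linarith
    have big: "cmod (z - of_int (a i)) \<ge> C / 2" if i: "i < n - 1" for i
    proof -
      have "cmod (z - of_int (a i)) \<ge> cmod z - cmod (of_int (a i) :: complex)" by (rule norm_triangle_ineq2)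
      thus ?thesis using aM[OF i] zc d2 C2n p2 by linarith
    qed
    have C2: "C / 2 \<ge> 1" using C2n M0 one_le_power[of "2::real" n] by linarith
    have "(C/2) ^ (n-1) \<le> (\<Prod>i<n-1. cmod (z - of_int (a i)))"
      using prod_mono[of "{..<n-1}" "\<lambda>_. C/2" "\<lambda>i. cmod (z - of_int (a i))"] big C2 by simp
    hence "(C/2) ^ (n-1) * d \<le> (\<Prod>i<n-1. cmod (z - of_int (a i))) * d" using d0 by (rule mult_right_mono)
    hence L: "(C/2) ^ (n-1) * d \<le> 1" using gn by simp
    hence "d * (C/2)^(n-1) \<le> 1" by (simp add: mult.commute)
    hence lg: "large n c z" unfolding large_def d_def C_def .
    have "(C/2) ^ (n-1) \<ge> 1" using C2 by (rule one_le_power)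
    hence "1 * d \<le> (C/2) ^ (n-1) * d" using d0 by (rule mult_right_mono)
    hence "d \<le> 1" using L by simp
    moreover have "cmod z \<le> C + d" using cC norm_triangle_ineq[of "of_int c" "z - of_int c"] unfolding d_def by simp
    ultimately show ?thesis using lg zc unfolding C_def by auto
  next
    case False
    then obtain i where i: "i < n - 1" "cmod (z - of_int (a i)) < 1/2" by (auto simp: not_le)
    have zM: "cmod z \<le> M + 1/2"
    proof -
      have "cmod z \<le> cmod (of_int (a i) :: complex) + cmod (z - of_int (a i))"
        using norm_triangle_ineq[of "of_int (a i)" "z - of_int (a i)"] by simp
      thus ?thesis using aM[OF i(1)] i(2) by linarith
    qed
    have others: "cmod (z - of_int (a j)) \<ge> 1/2" if j: "j < n - 1" "j \<noteq> i" for j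
    proof -
      have "cmod (of_int (a i) - of_int (a j) :: complex) \<ge> 1" using dist_ints[OF inj i(1) j(1)] j(2) by simp
      moreover have "cmod (of_int (a i) - of_int (a j) :: complex) \<le> cmod (z - of_int (a j)) + cmod (z - of_int (a i))"
        using norm_triangle_ineq4[of "z - of_int (a j)" "z - of_int (a i)"] by simp
      ultimately show ?thesis using i(2) by linarith
    qed
    have dC: "d \<ge> C / 2"
    proof -
      have "C \<le> cmod z + d" using cC norm_triangle_ineq4[of z "z - of_int c"] unfolding d_def by simp
      thus ?thesis using zM C2n M0 one_le_power[of "2::real" n] by linarith
    qed
    define e where "e = cmod (z - of_int (a i))"
    define P' where "P' = (\<Prod>j\<in>{..<n-1}-{i}. cmod (z - of_int (a j)))"
    have e0: "e \<ge> 0" unfolding e_def by simp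
    have "(\<Prod>j<n-1. cmod (z - of_int (a j))) = e * P'"
      unfolding e_def P'_def using i(1) by (subst prod.remove[of _ i]) auto
    hence one: "e * P' * d = 1" using gn by simp
    have P'b: "(1/2::real) ^ (n-2) \<le> P'"
    proof -
      have "(\<Prod>j\<in>{..<n-1}-{i}. (1/2::real)) \<le> P'"
        unfolding P'_def by (rule prod_mono) (use others in auto)
      moreover have "card ({..<n-1}-{i}) = n - 2" using i(1) by simp
      ultimately show ?thesis by simp
    qed
    have "e * (1/2) ^ (n-2) \<le> e * P'" using P'b e0 by (rule mult_left_mono)
    moreover have "(C/2) \<le> d" using dC .
    ultimately have "e * (1/2) ^ (n-2) * (C/2) \<le> e * P' * d"
      by (rule mult_mono) (use e0 in \<open>auto simp: P'_def C_def prod_nonneg\<close>)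
    hence A1: "e * C * ((1/2) ^ (n-2) * (1/2)) \<le> 1" using one by (simp add: mult_ac)
    have "n - 1 = Suc (n - 2)" using n3 by simp
    hence eqp: "(1/2::real) ^ (n-1) = (1/2) ^ (n-2) * (1/2)" by (simp only: power_Suc2)
    have A2: "e * C * (1/2) ^ (n-1) \<le> 1" by (subst eqp) (rule A1)
    have "e * C = (e * C * (1/2) ^ (n-1)) * 2 ^ (n-1)" by (simp add: power_one_over)
    also have "\<dots> \<le> 1 * 2 ^ (n-1)" using A2 by (rule mult_right_mono) simp
    finally have "cmod (z - of_int (a i)) * C \<le> 2 ^ (n - 1)" unfolding e_def by simp
    hence "near n a c z i" unfolding near_def C_def using i(1) by simp
    thus ?thesis using zM unfolding M_def by blast
  qed
qed

definition Bnd :: "nat \<Rightarrow> real \<Rightarrow> real" where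
  "Bnd n M = 8 ^ n * (2 * M + 2) ^ n"

lemma Bnd_facts:
  assumes n3: "n \<ge> 3" and M0: "M \<ge> 0" and CB: "C \<ge> Bnd n M"
  shows "C \<ge> 2 ^ n + 2 * M + 2" "C \<ge> 12" "C > 6 * 4 ^ n * (2 * M + 1) ^ (n - 3)"
proof -
  have p1: "(2 * M + 2) ^ n \<ge> 2 * M + 2"
    using power_increasing[of 1 n "2*M+2"] n3 M0 by simp
  have e8: "(8::real) ^ n = 2 ^ n * 4 ^ n" by (simp flip: power_mult_distrib)
  have t1: "(2::real) ^ n \<ge> 8" using power_increasing[of 3 n "2::real"] n3 by simp
  have t2: "(4::real) ^ n \<ge> 1" by simp
  have t4: "(4::real) ^ n \<ge> 4" using power_increasing[of 1 n "4::real"] n3 by simp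
  have "(2::real) ^ n * 4 ^ n \<ge> 2 ^ n * 4" using t4 by (intro mult_left_mono) auto
  hence e8b: "(8::real) ^ n \<ge> 2 ^ n + 2" using e8 t1 by linarith
  have "8 ^ n * (2 * M + 2) \<le> 8 ^ n * (2 * M + 2) ^ n" using p1 by (intro mult_left_mono) auto
  hence C8: "C \<ge> 8 ^ n * (2 * M + 2)" using CB unfolding Bnd_def by linarith
  have "(8::real) ^ n * (2 * M + 2) \<ge> 8 ^ n * 2" using M0 by (intro mult_left_mono) auto
  hence C12: "C \<ge> 12" using C8 e8b t1 by linarith
  have "8 ^ n * (2 * M + 2) \<ge> (2 ^ n + 2) * (2 * M + 2)" using e8b M0 by (intro mult_right_mono) auto
  moreover have "(2 ^ n + 2) * (2 * M + 2) \<ge> (2::real) ^ n + 2 * M + 2"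
  proof -
    have "(2::real) ^ n * M \<ge> 0" using M0 by simp
    thus ?thesis using M0 t1 by (simp add: algebra_simps)
  qed
  ultimately show c1: "C \<ge> 2 ^ n + 2 * M + 2" using C8 by linarith
  show "C \<ge> 12" by (rule C12)
  have q1: "(2 * M + 2) ^ n = (2 * M + 2) ^ (n - 3) * (2 * M + 2) ^ 3"
    using n3 by (simp flip: power_add)
  have q2: "(2 * M + 2) ^ (n - 3) \<ge> (2 * M + 1) ^ (n - 3)" using M0 by (intro power_mono) auto
  have q3: "(2 * M + 2) ^ 3 \<ge> (8::real)" using power_mono[of 2 "2*M+2" 3] M0 by simp
  have "(2 * M + 2) ^ n \<ge> (2 * M + 1) ^ (n - 3) * 8" unfolding q1
    using q2 q3 M0 by (intro mult_mono) auto
  moreover have "(8::real) ^ n \<ge> 8 * 4 ^ n" using e8 t1 by simp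
  ultimately have "Bnd n M \<ge> (8 * 4 ^ n) * ((2 * M + 1) ^ (n - 3) * 8)"
    unfolding Bnd_def using M0 by (intro mult_mono) auto
  moreover have "(8 * 4 ^ n) * ((2 * M + 1) ^ (n - 3) * 8) > 6 * 4 ^ n * (2 * M + 1) ^ (n - 3)"
  proof -
    have "(2 * M + 1) ^ (n - 3) > 0" using M0 by simp
    hence X: "(4::real) ^ n * (2 * M + 1) ^ (n - 3) > 0" by simp
    have "(8 * 4 ^ n) * ((2 * M + 1) ^ (n - 3) * 8) = 64 * ((4::real) ^ n * (2 * M + 1) ^ (n - 3))" by (simp add: mult_ac)
    moreover have "6 * 4 ^ n * (2 * M + 1) ^ (n - 3) = 6 * ((4::real) ^ n * (2 * M + 1) ^ (n - 3))" by (simp add: mult_ac)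
    ultimately show ?thesis using X by linarith
  qed
  ultimately show "C > 6 * 4 ^ n * (2 * M + 1) ^ (n - 3)" using CB by linarith
qed

lemma poly_prodlist_nth: "poly (\<Prod>x\<leftarrow>as. [:-x,1:]) (t::complex) = (\<Prod>k<length as. t - as ! k)"
proof (induction as)
  case Nil then show ?case by simp
next
  case (Cons b as)
  have "(\<Prod>k<Suc (length as). t - (b # as) ! k) = (t - (b # as) ! 0) * (\<Prod>k<length as. t - (b # as) ! Suc k)"
    by (rule prod.lessThan_Suc_shift)
  hence "(\<Prod>k<length (b # as). t - (b # as) ! k) = (t - b) * (\<Prod>k<length as. t - as ! k)"
    by simp
  then show ?case using Cons by (simp add: algebra_simps)
qed

lemma f_factor:
  assumes "n \<ge> 1"
  shows "\<exists>as. (of_int_poly (f_poly n a c) :: complex poly) = (\<Prod>x\<leftarrow>as. [:-x,1:]) \<and> length as = n"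
proof -
  have d: "degree (f_poly n a c) = n" and l: "lead_coeff (f_poly n a c) = 1"
    using f_poly_deg[of n a c, OF assms] by auto
  have "lead_coeff (of_int_poly (f_poly n a c) :: complex poly) = 1" using d l by simp
  moreover have dd: "degree (of_int_poly (f_poly n a c) :: complex poly) = n" using d by simp
  ultimately obtain as where as: "(of_int_poly (f_poly n a c) :: complex poly) = (\<Prod>x\<leftarrow>as. [:-x,1:])"
     "length as = degree (of_int_poly (f_poly n a c) :: complex poly)"
    using split_monic[of "of_int_poly (f_poly n a c)"] by blast
  show ?thesis by (rule exI[of _ as]) (use as dd in simp)
qed

lemma prod_two:
  fixes x :: "nat \<Rightarrow> real"
  assumes "finite I" "k \<in> I" "l \<in> I" "k \<noteq> l"
  shows "(\<Prod>p\<in>I. x p) = x k * x l * (\<Prod>p\<in>I-{k,l}. x p)"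
proof -
  have "(\<Prod>p\<in>I. x p) = x k * (\<Prod>p\<in>I-{k}. x p)" using assms by (subst prod.remove[of _ k]) auto
  also have "(\<Prod>p\<in>I-{k}. x p) = x l * (\<Prod>p\<in>I-{k}-{l}. x p)" using assms by (subst prod.remove[of _ l]) auto
  also have "I - {k} - {l} = I - {k,l}" by auto
  finally show ?thesis by (simp add: mult_ac)
qed

lemma prod_one_big:
  fixes x :: "nat \<Rightarrow> real"
  assumes J: "finite J" "card J = s" "s \<ge> 1"
    and b: "\<And>p. p \<in> J \<Longrightarrow> 0 \<le> x p \<and> x p \<le> X" and Y: "1 \<le> Y" "Y \<le> X"
    and u: "\<And>p q. p \<in> J \<Longrightarrow> q \<in> J \<Longrightarrow> x p > Y \<Longrightarrow> x q > Y \<Longrightarrow> p = q"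
  shows "(\<Prod>p\<in>J. x p) \<le> X * Y ^ (s - 1)"
proof (cases "\<exists>p\<in>J. x p > Y")
  case True
  then obtain p0 where p0: "p0 \<in> J" "x p0 > Y" by blast
  have "(\<Prod>p\<in>J. x p) = x p0 * (\<Prod>p\<in>J-{p0}. x p)" using J p0 by (subst prod.remove[of _ p0]) auto
  have "(\<Prod>p\<in>J-{p0}. x p) \<le> Y ^ (s - 1)"
  proof (rule prod_le_power)
    fix p assume p: "p \<in> J - {p0}"
    hence "\<not> x p > Y" using u[of p p0] p0 by auto
    thus "0 \<le> x p \<and> x p \<le> Y" using b p by auto
  qed (use J p0 Y in auto)
  have pb: "(\<Prod>p\<in>J-{p0}. x p) \<le> Y ^ (s - 1)" by fact
  have "x p0 * (\<Prod>p\<in>J-{p0}. x p) \<le> X * Y ^ (s - 1)"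
    by (rule mult_mono) (use b[OF p0(1)] pb b in \<open>auto intro: prod_nonneg\<close>)
  thus ?thesis using \<open>(\<Prod>p\<in>J. x p) = x p0 * (\<Prod>p\<in>J-{p0}. x p)\<close> by simp
next
  case False
  have "(\<Prod>p\<in>J. x p) \<le> Y ^ s" by (rule prod_le_power) (use b False J Y in \<open>auto simp: not_less\<close>)
  also have "Y ^ s = Y * Y ^ (s - 1)" using J by (cases s) auto
  also have "\<dots> \<le> X * Y ^ (s - 1)" using Y by (intro mult_right_mono) auto
  finally show ?thesis .
qed

lemma sq12: "12 \<le> (x::real) \<Longrightarrow> 3 * x \<le> (x / 2) * (x / 2)"
proof -
  assume x: "12 \<le> x"
  have "12 * x \<le> x * x" using x by (intro mult_right_mono) auto
  thus ?thesis by (simp add: field_simps)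
qed

locale rs =
  fixes n :: nat and a :: "nat \<Rightarrow> int" and c :: int
  assumes n3: "n \<ge> 3" and inj: "inj_on a {..<n-1}" and cB: "\<bar>real_of_int c\<bar> \<ge> Bnd n (Msum n a)"
begin

abbreviation "C \<equiv> \<bar>real_of_int c\<bar>"
abbreviation "M \<equiv> Msum n a"
abbreviation "isrt z \<equiv> poly (of_int_poly (f_poly n a c) :: complex poly) z = 0"

lemma M0: "M \<ge> 0" by (rule Msum_nonneg)
lemma F1: "C \<ge> 2 ^ n + 2 * M + 2" using Bnd_facts(1)[OF n3 M0 cB] .
lemma F2: "C \<ge> 12" using Bnd_facts(2)[OF n3 M0 cB] .
lemma F3: "C > 6 * 4 ^ n * (2 * M + 1) ^ (n - 3)" using Bnd_facts(3)[OF n3 M0 cB] .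

lemma cls: "isrt z \<Longrightarrow> (large n c z \<and> cmod z \<ge> C - 1 \<and> cmod z \<le> C + 1) \<or> (\<exists>i. near n a c z i \<and> cmod z \<le> M + 1/2)"
  using root_class[OF n3 inj F1] by blast

lemma root_le: assumes "isrt z" shows "cmod z \<le> C + 1"
proof -
  have "(2::real) ^ n \<ge> 1" by simp
  thus ?thesis using cls[OF assms] M0 F1 by linarith
qed

lemma aM: "i < n - 1 \<Longrightarrow> cmod (of_int (a i) :: complex) \<le> M"
  using Msum_ge[of i n a] by (metis norm_of_int)

lemma two_large_idx:
  assumes as: "(of_int_poly (f_poly n a c) :: complex poly) = (\<Prod>x\<leftarrow>as. [:-x,1:])" "length as = n"
    and kl: "k < n" "l < n" "k \<noteq> l" and lk: "large n c (as ! k)" "large n c (as ! l)"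
  shows False
proof -
  define x where "x = (\<lambda>p. cmod (of_int c - as ! p))"
  have rt: "isrt (as ! p)" if "p < n" for p
    using as that poly_prodlist_zero[of as "as ! p"] by (simp add: nth_mem)
  have "poly (of_int_poly (f_poly n a c) :: complex poly) (of_int c) = -1"
    by (rule f_at_points) simp
  hence "(\<Prod>p<n. (of_int c - as ! p)) = (-1 :: complex)" using as poly_prodlist_nth by metis
  hence P1: "(\<Prod>p<n. x p) = 1" unfolding x_def by (metis norm_minus_cancel norm_one prod_norm)
  have xb: "0 \<le> x p \<and> x p \<le> 3 * C" if "p < n" for p
  proof -
    have "x p \<le> cmod (of_int c :: complex) + cmod (as ! p)" unfolding x_def by (rule norm_triangle_ineq4)
    moreover have "cmod (of_int c :: complex) = C" by (metis norm_of_int)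
    ultimately show ?thesis using root_le[OF rt[OF that]] F2 unfolding x_def by simp
  qed
  define P' where "P' = (\<Prod>p\<in>{..<n}-{k,l}. x p)"
  have split: "(\<Prod>p<n. x p) = x k * x l * P'" unfolding P'_def using kl by (intro prod_two) auto
  have P'b: "P' \<le> (3 * C) ^ (n - 2)" unfolding P'_def
    by (rule prod_le_power) (use xb kl F2 in auto)
  have P'0: "P' \<ge> 0" unfolding P'_def by (rule prod_nonneg) (use xb in auto)
  define Q where "Q = (C / 2) ^ (n - 1)"
  have Q0: "Q \<ge> 0" unfolding Q_def by simp
  have xk: "x k * Q \<le> 1" "x l * Q \<le> 1" using lk unfolding large_def x_def Q_def by (simp_all add: norm_minus_commute)
  have x0: "x k \<ge> 0" "x l \<ge> 0" unfolding x_def by auto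
  have one: "x k * x l * P' = 1" using split P1 by simp
  have "(x k * Q) * (x l * Q) * P' = Q * Q * (x k * x l * P')" by (simp add: mult_ac)
  hence QQ: "Q * Q = (x k * Q) * (x l * Q) * P'" using one by simp
  have "(x k * Q) * (x l * Q) \<le> 1" by (rule mult_le_one) (use xk x0 Q0 in auto)
  hence "(x k * Q) * (x l * Q) * P' \<le> 1 * P'" using P'0 by (rule mult_right_mono)
  hence "Q * Q \<le> P'" unfolding QQ by simp
  hence up: "Q * Q \<le> (3 * C) ^ (n - 2)" using P'b by linarith
  have "(C / 2) * (C / 2) \<ge> 3 * C" using F2 by (rule sq12)
  hence "((C / 2) * (C / 2)) ^ (n - 1) \<ge> (3 * C) ^ (n - 1)" using F2 by (intro power_mono) auto
  moreover have "(3 * C) ^ (n - 2) < (3 * C) ^ (n - 1)" using F2 n3 by (intro power_strict_increasing) auto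
  moreover have "Q * Q = ((C / 2) * (C / 2)) ^ (n - 1)" unfolding Q_def by (rule power_mult_distrib[symmetric])
  ultimately show False using up by linarith
qed

lemma two_near_idx:
  assumes as: "(of_int_poly (f_poly n a c) :: complex poly) = (\<Prod>x\<leftarrow>as. [:-x,1:])" "length as = n"
    and kl: "k < n" "l < n" "k \<noteq> l" and nk: "near n a c (as ! k) i" "near n a c (as ! l) i"
  shows False
proof -
  have i: "i < n - 1" using nk unfolding near_def by auto
  define x where "x = (\<lambda>p. cmod (of_int (a i) - as ! p))"
  have rt: "isrt (as ! p)" if "p < n" for p
    using as that poly_prodlist_zero[of as "as ! p"] by (simp add: nth_mem)
  have "poly (of_int_poly (f_poly n a c) :: complex poly) (of_int (a i)) = -1"
    by (rule f_at_points) (use i in auto)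
  hence "(\<Prod>p<n. (of_int (a i) - as ! p)) = (-1 :: complex)" using as poly_prodlist_nth by metis
  hence P1: "(\<Prod>p<n. x p) = 1" unfolding x_def by (metis norm_minus_cancel norm_one prod_norm)
  have xb: "0 \<le> x p \<and> x p \<le> 2 * C" if "p < n" for p
  proof -
    have "x p \<le> cmod (of_int (a i) :: complex) + cmod (as ! p)" unfolding x_def by (rule norm_triangle_ineq4)
    moreover have "(2::real) ^ n \<ge> 1" by simp
    moreover have "x p \<ge> 0" unfolding x_def by simp
    ultimately show ?thesis using root_le[OF rt[OF that]] aM[OF i] F1 M0 by linarith
  qed
  have xsmall: "x p \<le> 2 * M + 1" if pn: "p < n" and nl: "\<not> large n c (as ! p)" for p
  proof -
    obtain j where "near n a c (as ! p) j" "cmod (as ! p) \<le> M + 1/2" using cls[OF rt[OF pn]] nl by blast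
    moreover have "x p \<le> cmod (of_int (a i) :: complex) + cmod (as ! p)" unfolding x_def by (rule norm_triangle_ineq4)
    ultimately show ?thesis using aM[OF i] by simp
  qed
  define J where "J = {..<n}-{k,l}"
  define P' where "P' = (\<Prod>p\<in>J. x p)"
  have split: "(\<Prod>p<n. x p) = x k * x l * P'" unfolding P'_def J_def using kl by (intro prod_two) auto
  have cardJ: "card J = n - 2" unfolding J_def using kl by (simp add: card_Diff_subset)
  have P'b: "P' \<le> (2 * C) * (2 * M + 1) ^ (n - 2 - 1)" unfolding P'_def
  proof (rule prod_one_big[OF _ cardJ])
    show "finite J" unfolding J_def by simp
    show "1 \<le> n - 2" using n3 by simp
    show "0 \<le> x p \<and> x p \<le> 2 * C" if "p \<in> J" for p using xb that unfolding J_def by auto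
    show "1 \<le> 2 * M + 1" using M0 by simp
    have "(2::real) ^ n \<ge> 1" by simp
    thus "2 * M + 1 \<le> 2 * C" using F1 M0 by linarith
    show "p = q" if "p \<in> J" "q \<in> J" "x p > 2 * M + 1" "x q > 2 * M + 1" for p q
    proof (rule ccontr)
      assume "p \<noteq> q"
      have "large n c (as ! p)" "large n c (as ! q)" using xsmall that unfolding J_def by force+
      thus False using two_large_idx[OF as, of p q] \<open>p \<noteq> q\<close> that unfolding J_def by auto
    qed
  qed
  have P'0: "P' \<ge> 0" unfolding P'_def by (rule prod_nonneg) (use xb in \<open>auto simp: J_def\<close>)
  have xk: "x k * C \<le> 2 ^ (n-1)" "x l * C \<le> 2 ^ (n-1)" using nk unfolding near_def x_def by (simp_all add: norm_minus_commute)
  have x0: "x k \<ge> 0" "x l \<ge> 0" unfolding x_def by auto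
  have one: "x k * x l * P' = 1" using split P1 by simp
  have "(x k * C) * (x l * C) * P' = C * C * (x k * x l * P')" by (simp add: mult_ac)
  hence CC: "C * C = (x k * C) * (x l * C) * P'" using one by simp
  have "(x k * C) * (x l * C) \<le> 2 ^ (n-1) * 2 ^ (n-1)" using xk x0 by (intro mult_mono) auto
  also have "(2::real) ^ (n-1) * 2 ^ (n-1) = 4 ^ (n-1)" by (simp flip: power_mult_distrib)
  finally have "(x k * C) * (x l * C) * P' \<le> 4 ^ (n-1) * P'" using P'0 by (rule mult_right_mono)
  also have "\<dots> \<le> 4 ^ (n-1) * ((2 * C) * (2 * M + 1) ^ (n - 2 - 1))" using P'b by (intro mult_left_mono) auto
  finally have "C * C \<le> 4 ^ (n-1) * ((2 * C) * (2 * M + 1) ^ (n - 2 - 1))" using CC by linarith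
  also have "4 ^ (n-1) * ((2 * C) * (2 * M + 1) ^ (n - 2 - 1)) = C * (2 * 4 ^ (n-1) * (2 * M + 1) ^ (n - 3))"
    by (simp add: mult_ac numeral_3_eq_3)
  finally have "C * C \<le> C * (2 * 4 ^ (n-1) * (2 * M + 1) ^ (n - 3))" .
  moreover have "C > 0" using F2 by linarith
  ultimately have "C \<le> 2 * 4 ^ (n-1) * (2 * M + 1) ^ (n - 3)" by (simp only: mult_le_cancel_left_pos)
  moreover have "2 * 4 ^ (n-1) * (2 * M + 1) ^ (n - 3) \<le> 6 * 4 ^ n * (2 * M + 1) ^ (n - 3)"
  proof -
    have "(4::real) ^ (n-1) \<le> 4 ^ n" by (rule power_increasing) auto
    moreover have "(4::real) ^ n \<ge> 0" by simp
    ultimately have "2 * (4::real) ^ (n-1) \<le> 6 * 4 ^ n" by linarith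
    thus ?thesis using M0 by (intro mult_right_mono) auto
  qed
  ultimately show False using F3 by linarith
qed

end

context rs begin

lemma fac: obtains as where "(of_int_poly (f_poly n a c) :: complex poly) = (\<Prod>x\<leftarrow>as. [:-x,1:])" "length as = n"
proof -
  have "n \<ge> 1" using n3 by simp
  from f_factor[OF this, of a c] obtain as where
    "(of_int_poly (f_poly n a c) :: complex poly) = (\<Prod>x\<leftarrow>as. [:-x,1:])" "length as = n" by blast
  thus ?thesis using that by blast
qed

lemma root_in: assumes "(of_int_poly (f_poly n a c) :: complex poly) = (\<Prod>x\<leftarrow>as. [:-x,1:])" "length as = n" "isrt z"
  obtains k where "k < n" "z = as ! k"
proof -
  have "poly (\<Prod>x\<leftarrow>as. [:-x,1:]) z = 0" using assms(3) unfolding assms(1) .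
  hence "z \<in> set as" unfolding poly_prodlist_zero .
  then obtain k where "k < length as" "as ! k = z" by (auto simp: in_set_conv_nth)
  thus ?thesis using that assms(2) by auto
qed

lemma distinct_large: "isrt z \<Longrightarrow> isrt w \<Longrightarrow> z \<noteq> w \<Longrightarrow> large n c z \<Longrightarrow> large n c w \<Longrightarrow> False"
proof -
  assume h: "isrt z" "isrt w" "z \<noteq> w" "large n c z" "large n c w"
  obtain as where as: "(of_int_poly (f_poly n a c) :: complex poly) = (\<Prod>x\<leftarrow>as. [:-x,1:])" "length as = n" by (rule fac)
  obtain k where k: "k < n" "z = as ! k" using root_in[OF as h(1)] .
  obtain l where l: "l < n" "w = as ! l" using root_in[OF as h(2)] .
  have "k \<noteq> l" using k l h(3) by auto
  thus False using two_large_idx[OF as k(1) l(1)] h k l by auto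
qed

lemma distinct_near: "isrt z \<Longrightarrow> isrt w \<Longrightarrow> z \<noteq> w \<Longrightarrow> near n a c z i \<Longrightarrow> near n a c w i \<Longrightarrow> False"
proof -
  assume h: "isrt z" "isrt w" "z \<noteq> w" "near n a c z i" "near n a c w i"
  obtain as where as: "(of_int_poly (f_poly n a c) :: complex poly) = (\<Prod>x\<leftarrow>as. [:-x,1:])" "length as = n" by (rule fac)
  obtain k where k: "k < n" "z = as ! k" using root_in[OF as h(1)] .
  obtain l where l: "l < n" "w = as ! l" using root_in[OF as h(2)] .
  have "k \<noteq> l" using k l h(3) by auto
  thus False using two_near_idx[OF as k(1) l(1)] h k l by auto
qed

lemma card_roots: "finite {z. isrt z} \<and> card {z. isrt z} = n"
proof -
  obtain as where as: "(of_int_poly (f_poly n a c) :: complex poly) = (\<Prod>x\<leftarrow>as. [:-x,1:])" "length as = n" by (rule fac)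
  have set: "{z. isrt z} = set as" unfolding as(1) poly_prodlist_zero by simp
  have "distinct as"
  proof (subst distinct_conv_nth, intro allI impI)
    fix k l assume kl: "k < length as" "l < length as" "k \<noteq> l"
    show "as ! k \<noteq> as ! l"
    proof
      assume eq: "as ! k = as ! l"
      have "as ! k \<in> {z. isrt z}" unfolding set using kl by simp
      hence rt: "isrt (as ! k)" by (rule CollectD)
      have "large n c (as ! k) \<or> (\<exists>i. near n a c (as ! k) i)" using cls[OF rt] by blast
      thus False
      proof
        assume "large n c (as ! k)"
        thus False using two_large_idx[OF as, of k l] kl eq as(2) by auto
      next
        assume "\<exists>i. near n a c (as ! k) i"
        then obtain i where "near n a c (as ! k) i" by blast
        thus False using two_near_idx[OF as, of k l i] kl eq as(2) by auto
      qed
    qed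
  qed
  thus ?thesis using set as(2) by (simp add: distinct_card)
qed

end

lemma prod_list_upt: "prod_list (map f [0..<n]) = (\<Prod>k<n. f k)"
  by (induction n) auto

lemma poly_sum_lt:
  fixes p :: "'a::comm_ring_1 poly"
  assumes "degree p < n"
  shows "poly p x = (\<Sum>j<n. coeff p j * x ^ j)"
proof -
  have "poly p x = (\<Sum>j\<le>degree p. coeff p j * x ^ j)" by (rule poly_altdef)
  also have "\<dots> = (\<Sum>j<n. coeff p j * x ^ j)"
    by (rule sum.mono_neutral_left) (use assms in \<open>auto simp: coeff_eq_0\<close>)
  finally show ?thesis .
qed

lemma ev_sum_lt:
  assumes "degree P < n"
  shows "ev P x = (\<Sum>j<n. of_rat (coeff P j) * x ^ j)"
  unfolding ev_def using assms by (subst poly_sum_lt[of _ n]) (auto simp: coeff_map_poly)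

lemma ev_monom: "ev (monom 1 i) x = x ^ i"
  unfolding ev_def by (simp add: of_rat_hom.map_poly_hom_monom poly_monom)

lemma vand_nonzero:
  fixes th :: "nat \<Rightarrow> complex"
  assumes inj: "inj_on th {..<n}"
  shows "det (mat n n (\<lambda>(i,k). th k ^ i)) \<noteq> 0"
proof
  define V where "V = mat n n (\<lambda>(i,k). th k ^ i)"
  have V: "V \<in> carrier_mat n n" unfolding V_def by simp
  assume "det (mat n n (\<lambda>(i,k). th k ^ i)) = 0"
  hence "det (transpose_mat V) = 0" unfolding V_def by (subst det_transpose) auto
  then obtain v where v: "v \<in> carrier_vec n" "v \<noteq> 0\<^sub>v n" "transpose_mat V *\<^sub>v v = 0\<^sub>v n"
    using det_0_iff_vec_prod_zero[of "transpose_mat V" n] V by auto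
  define P :: "complex poly" where "P = (\<Sum>i<n. monom (v $ i) i)"
  have root: "poly P (th k) = 0" if k: "k < n" for k
  proof -
    have "0 = (transpose_mat V *\<^sub>v v) $ k" using v(3) k by simp
    also have "\<dots> = (\<Sum>i<n. th k ^ i * v $ i)"
      using k v(1) V unfolding V_def by (auto simp: scalar_prod_def lessThan_atLeast0 intro!: sum.cong)
    also have "\<dots> = poly P (th k)" unfolding P_def by (simp add: poly_sum poly_monom mult.commute)
    finally show ?thesis by simp
  qed
  have "P = 0"
  proof (rule ccontr)
    assume P0: "P \<noteq> 0"
    have "degree P \<le> n - 1" unfolding P_def
      by (rule degree_sum_le) (auto intro: order.trans[OF degree_monom_le])
    moreover have "th ` {..<n} \<subseteq> {x. poly P x = 0}" using root by auto
    hence "card (th ` {..<n}) \<le> card {x. poly P x = 0}"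
      using poly_roots_finite[OF P0] by (intro card_mono) auto
    hence "n \<le> card {x. poly P x = 0}" using inj by (simp add: card_image)
    moreover have "card {x. poly P x = 0} \<le> degree P" by (rule card_poly_roots_bound[OF P0])
    moreover have "n \<noteq> 0" using v(1) v(2) by (metis carrier_vecD eq_vecI less_nat_zero_code index_zero_vec(2))
    ultimately show False by linarith
  qed
  have "v = 0\<^sub>v n"
  proof (rule eq_vecI)
    fix i assume "i < dim_vec (0\<^sub>v n :: complex vec)"
    hence i: "i < n" by simp
    have "coeff P i = v $ i" unfolding P_def using i by (simp add: coeff_sum coeff_monom)
    thus "v $ i = 0\<^sub>v n $ i" using \<open>P = 0\<close> i by simp
  qed (use v(1) in simp)
  with v(2) show False by simp
qed

lemma norm_rat:
  fixes F D :: "rat poly" and th :: "nat \<Rightarrow> complex"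
  assumes n: "n \<ge> 1" and Fd: "degree F = n" and F1: "lead_coeff F = 1"
    and th: "\<And>k. k < n \<Longrightarrow> ev F (th k) = 0" and inj: "inj_on th {..<n}"
  shows "(\<Prod>k<n. ev D (th k)) \<in> \<rat>"
proof -
  have Fnz: "F \<noteq> 0" using F1 by auto
  define R where "R = (\<lambda>i. (D * monom 1 i) mod F)"
  have degR: "degree (R i) < n" for i
    using degree_mod_less[OF Fnz, of "D * monom 1 i"] Fd n unfolding R_def by auto
  have key: "ev D t * t ^ i = (\<Sum>j<n. of_rat (coeff (R i) j) * t ^ j)" if t: "ev F t = 0" for t i
  proof -
    have "D * monom 1 i = (D * monom 1 i) div F * F + R i" unfolding R_def by simp
    hence "ev (D * monom 1 i) t = ev ((D * monom 1 i) div F) t * ev F t + ev (R i) t"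
      by (metis ev_add ev_mult)
    hence "ev D t * t ^ i = ev (R i) t" using t by (simp add: ev_monom)
    thus ?thesis using ev_sum_lt[OF degR] by simp
  qed
  define Mr :: "rat mat" where "Mr = mat n n (\<lambda>(i,j). coeff (R i) j)"
  define Mc :: "complex mat" where "Mc = of_rat_hom.mat_hom Mr"
  define V :: "complex mat" where "V = mat n n (\<lambda>(i,k). th k ^ i)"
  define Dg :: "complex mat" where "Dg = mat n n (\<lambda>(i,k). if i = k then ev D (th k) else 0)"
  have car: "Mc \<in> carrier_mat n n" "V \<in> carrier_mat n n" "Dg \<in> carrier_mat n n"
    unfolding Mc_def Mr_def V_def Dg_def by auto
  have MV: "Mc * V = V * Dg"
  proof (rule eq_matI)
    fix i k assume ik: "i < dim_row (V * Dg)" "k < dim_col (V * Dg)"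
    hence i: "i < n" and k: "k < n" using car by auto
    have "(Mc * V) $$ (i, k) = (\<Sum>j<n. of_rat (coeff (R i) j) * th k ^ j)"
      using i k unfolding Mc_def Mr_def V_def
      by (auto simp: scalar_prod_def lessThan_atLeast0 intro!: sum.cong)
    also have "\<dots> = ev D (th k) * th k ^ i" using key[OF th[OF k]] by simp
    also have "\<dots> = (\<Sum>j<n. th j ^ i * (if j = k then ev D (th k) else 0))"
      using k by (simp add: if_distrib sum.delta mult.commute cong: if_cong)
    also have "\<dots> = (V * Dg) $$ (i, k)"
      using i k unfolding V_def Dg_def
      by (auto simp: scalar_prod_def lessThan_atLeast0 intro!: sum.cong)
    finally show "(Mc * V) $$ (i, k) = (V * Dg) $$ (i, k)" .
  qed (use car in auto)
  have "det Mc * det V = det V * det Dg"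
    using MV det_mult[OF car(1) car(2)] det_mult[OF car(2) car(3)] by metis
  moreover have "det V \<noteq> 0" unfolding V_def by (rule vand_nonzero[OF inj])
  ultimately have dM: "det Mc = det Dg" by simp
  have "upper_triangular Dg" unfolding upper_triangular_def Dg_def by auto
  hence "det Dg = prod_list (diag_mat Dg)" using car(3) by (rule det_upper_triangular)
  also have "\<dots> = (\<Prod>k<n. ev D (th k))" unfolding diag_mat_def Dg_def
    by (simp add: prod_list_upt)
  finally have "det Mc = (\<Prod>k<n. ev D (th k))" using dM by simp
  moreover have "det Mc = of_rat (det Mr)" unfolding Mc_def by (rule of_rat_hom.hom_det)
  ultimately show ?thesis by (metis Rats_of_rat)
qed

lemma prod_three:
  fixes x :: "nat \<Rightarrow> real"
  assumes "finite I" "j \<in> I" "k \<in> I" "l \<in> I" "j \<noteq> k" "j \<noteq> l" "k \<noteq> l"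
  shows "(\<Prod>p\<in>I. x p) = x j * x k * x l * (\<Prod>p\<in>I-{j,k,l}. x p)"
proof -
  have "(\<Prod>p\<in>I. x p) = x j * (\<Prod>p\<in>I-{j}. x p)" using assms by (subst prod.remove[of _ j]) auto
  also have "(\<Prod>p\<in>I-{j}. x p) = x k * x l * (\<Prod>p\<in>I-{j}-{k,l}. x p)"
    using assms by (intro prod_two) auto
  also have "I - {j} - {k,l} = I - {j,k,l}" by auto
  finally show ?thesis by (simp add: mult_ac)
qed

lemma common_root:
  fixes z :: complex
  assumes "poly (of_int_poly (f_poly n a c)) z = 0" "poly (of_int_poly (f_poly n a c')) z = 0" "c \<noteq> c'"
  shows False
proof -
  define g where "g = (\<Prod>i<n-1. (z - of_int (a i)))"
  have e1: "g * (z - of_int c) = 1" and e2: "g * (z - of_int c') = 1"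
    using assms(1,2) unfolding f_poly_eval g_def by simp_all
  have "g * (of_int c' - of_int c) = g * (z - of_int c) - g * (z - of_int c')" by (simp add: algebra_simps)
  hence "g * (of_int c' - of_int c) = 0" using e1 e2 by simp
  moreover have "(of_int c' - of_int c :: complex) \<noteq> 0" using assms(3) by simp
  ultimately have "g = 0" by simp
  with e1 show False by simp
qed

lemma norm_contra:
  fixes r r' :: "nat \<Rightarrow> complex" and A :: real
  assumes n3: "n \<ge> 3" and inj: "inj_on a {..<n-1}"
    and AB: "A \<ge> Bnd n (Msum n a)"
    and cA: "A \<le> \<bar>real_of_int c\<bar>" "\<bar>real_of_int c\<bar> \<le> 2 * A"
    and cA': "A \<le> \<bar>real_of_int c'\<bar>" "\<bar>real_of_int c'\<bar> \<le> 2 * A"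
    and cc: "c \<noteq> c'"
    and rt: "\<And>k. k < n \<Longrightarrow> poly (of_int_poly (f_poly n a c)) (r k) = 0"
    and rt': "\<And>k. k < n \<Longrightarrow> poly (of_int_poly (f_poly n a c')) (r' k) = 0"
    and jk: "j < n" "k1 < n" "k2 < n" "j \<noteq> k1" "j \<noteq> k2" "k1 \<noteq> k2"
    and nr: "near n a c (r k1) i1" "near n a c' (r' k1) i1" "near n a c (r k2) i2" "near n a c' (r' k2) i2"
    and sm: "\<And>k. k < n \<Longrightarrow> k \<notin> {j,k1,k2} \<Longrightarrow> cmod (r k) \<le> Msum n a + 1/2 \<and> cmod (r' k) \<le> Msum n a + 1/2"
    and NZ: "(\<Prod>k<n. r k - r' k) \<in> \<int>"
  shows False
proof -
  define M where "M = Msum n a"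
  have M0: "M \<ge> 0" unfolding M_def by (rule Msum_nonneg)
  have F: "A \<ge> 12" "A > 6 * 4 ^ n * (2 * M + 1) ^ (n - 3)"
    using Bnd_facts(2,3)[OF n3 Msum_nonneg AB] unfolding M_def by auto
  have rsc: "rs n a c" using n3 inj AB cA by unfold_locales auto
  have rsc': "rs n a c'" using n3 inj AB cA' by unfold_locales auto
  define x where "x = (\<lambda>k. cmod (r k - r' k))"
  have x0: "x k \<ge> 0" for k unfolding x_def by simp
  have nz: "r k - r' k \<noteq> 0" if "k < n" for k
    using common_root[OF rt[OF that] _ cc] rt'[OF that] by auto
  obtain m where m: "(\<Prod>k<n. r k - r' k) = of_int m" using NZ by (auto elim: Ints_cases)
  have "m \<noteq> 0" using m nz by (metis (no_types, lifting) lessThan_iff of_int_0 prod_zero_iff finite_lessThan)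
  hence "cmod (of_int m :: complex) \<ge> 1" by (metis norm_of_int of_int_1_le_iff abs_ge_self dual_order.trans
        zero_less_abs_iff int_one_le_iff_zero_less of_int_abs)
  hence N1: "(\<Prod>k<n. x k) \<ge> 1" unfolding x_def using m by (simp add: prod_norm)
  have split: "(\<Prod>k<n. x k) = x j * x k1 * x k2 * (\<Prod>k\<in>{..<n}-{j,k1,k2}. x k)"
    by (rule prod_three) (use jk in auto)
  have xj: "x j \<le> 4 * A + 2"
  proof -
    have "x j \<le> cmod (r j) + cmod (r' j)" unfolding x_def by (rule norm_triangle_ineq4)
    thus ?thesis using rs.root_le[OF rsc rt[OF jk(1)]] rs.root_le[OF rsc' rt'[OF jk(1)]] cA cA' by linarith
  qed
  have xnear: "x k * A \<le> 2 ^ n" if "near n a c (r k) i" "near n a c' (r' k) i" for k i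
  proof -
    have "x k \<le> cmod (r k - of_int (a i)) + cmod (r' k - of_int (a i))" unfolding x_def
      using norm_triangle_ineq4[of "r k - of_int (a i)" "r' k - of_int (a i)"] by simp
    moreover have "cmod (r k - of_int (a i)) * A \<le> 2 ^ (n-1)"
    proof -
      have "cmod (r k - of_int (a i)) * A \<le> cmod (r k - of_int (a i)) * \<bar>real_of_int c\<bar>"
        using cA by (intro mult_left_mono) auto
      thus ?thesis using that(1) unfolding near_def by linarith
    qed
    moreover have "cmod (r' k - of_int (a i)) * A \<le> 2 ^ (n-1)"
    proof -
      have "cmod (r' k - of_int (a i)) * A \<le> cmod (r' k - of_int (a i)) * \<bar>real_of_int c'\<bar>"
        using cA' by (intro mult_left_mono) auto
      thus ?thesis using that(2) unfolding near_def by linarith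
    qed
    moreover have "(2::real) ^ n = 2 ^ (n-1) + 2 ^ (n-1)" using n3 by (cases n) auto
    moreover have "A \<ge> 0" using F by simp
    ultimately have "x k * A \<le> (cmod (r k - of_int (a i)) + cmod (r' k - of_int (a i))) * A"
      by (intro mult_right_mono) auto
    also have "\<dots> \<le> 2 ^ n" using calculation \<open>cmod (r k - of_int (a i)) * A \<le> 2 ^ (n-1)\<close>
      \<open>cmod (r' k - of_int (a i)) * A \<le> 2 ^ (n-1)\<close> \<open>(2::real) ^ n = 2 ^ (n-1) + 2 ^ (n-1)\<close>
      by (simp add: algebra_simps)
    finally show ?thesis .
  qed
  have x1: "x k1 * A \<le> 2 ^ n" using xnear nr(1,2) .
  have x2: "x k2 * A \<le> 2 ^ n" using xnear nr(3,4) .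
  define P' where "P' = (\<Prod>k\<in>{..<n}-{j,k1,k2}. x k)"
  have P'b: "P' \<le> (2 * M + 1) ^ (n - 3)" unfolding P'_def
  proof (rule prod_le_power)
    fix k assume k: "k \<in> {..<n}-{j,k1,k2}"
    have "x k \<le> cmod (r k) + cmod (r' k)" unfolding x_def by (rule norm_triangle_ineq4)
    thus "0 \<le> x k \<and> x k \<le> 2 * M + 1" using sm[of k] k x0[of k] unfolding M_def by auto
  next
    show "card ({..<n}-{j,k1,k2}) \<le> n - 3" using jk by (simp add: card_Diff_subset)
  qed (use M0 in auto)
  have P'0: "P' \<ge> 0" unfolding P'_def by (rule prod_nonneg) (use x0 in auto)
  have "A * A \<le> A * A * (\<Prod>k<n. x k)" using N1 F by simp
  also have "\<dots> = x j * (x k1 * A) * (x k2 * A) * P'" unfolding split P'_def by (simp add: mult_ac)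
  also have "\<dots> \<le> (4 * A + 2) * 2 ^ n * 2 ^ n * (2 * M + 1) ^ (n - 3)"
    by (intro mult_mono xj x1 x2 P'b) (use x0 F P'0 M0 in auto)
  also have "\<dots> = (4 * A + 2) * (4 ^ n * (2 * M + 1) ^ (n - 3))"
    by (simp add: mult_ac flip: power_mult_distrib)
  also have "\<dots> \<le> (5 * A) * (4 ^ n * (2 * M + 1) ^ (n - 3))"
    using F M0 by (intro mult_right_mono) auto
  finally have "A * A \<le> A * (5 * (4 ^ n * (2 * M + 1) ^ (n - 3)))" by (simp add: mult_ac)
  hence "A \<le> 5 * (4 ^ n * (2 * M + 1) ^ (n - 3))" using F by (simp add: mult_le_cancel_left_pos)
  moreover have "(4::real) ^ n * (2 * M + 1) ^ (n - 3) \<ge> 0" using M0 by simp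
  ultimately show False using F(2) by (simp add: mult_ac)
qed

theorem proposition4p2:
  fixes n :: nat and a :: "nat \<Rightarrow> int"
  assumes "n \<ge> 3" and "inj_on a {..<n-1}"
  shows "\<exists>A1::int. \<forall>A \<ge> A1. \<forall>(S::int set) (\<xi>::int \<Rightarrow> complex).
           (\<forall>c\<in>S. A \<le> \<bar>c\<bar> \<and> \<bar>c\<bar> \<le> 2 * A \<and> c \<notin> a ` {..<n-1}
                  \<and> poly (map_poly of_int (f_poly n a c)) (\<xi> c) = 0) \<and>
           (\<exists>K::complex set. \<forall>c\<in>S. fields_iso (gen_field (\<xi> c)) K)
           \<longrightarrow> card S \<le> n * (n-1) * (n-2)"
proof -
  note n3 = assms(1) and inj = assms(2)
  have n1: "n \<ge> 1" using n3 by simp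
  define M where "M = Msum n a"
  define A1 :: int where "A1 = ceiling (Bnd n M) + 1"
  show ?thesis
  proof (rule exI[of _ A1], intro allI impI)
    fix A :: int and S :: "int set" and \<xi> :: "int \<Rightarrow> complex"
    assume AA: "A1 \<le> A"
    assume H: "(\<forall>c\<in>S. A \<le> \<bar>c\<bar> \<and> \<bar>c\<bar> \<le> 2 * A \<and> c \<notin> a ` {..<n-1}
                  \<and> poly (map_poly of_int (f_poly n a c)) (\<xi> c) = 0) \<and>
           (\<exists>K::complex set. \<forall>c\<in>S. fields_iso (gen_field (\<xi> c)) K)"
    have Hc: "\<And>c. c \<in> S \<Longrightarrow> A \<le> \<bar>c\<bar> \<and> \<bar>c\<bar> \<le> 2 * A \<and> c \<notin> a ` {..<n-1}
                  \<and> poly (map_poly of_int (f_poly n a c)) (\<xi> c) = 0" using H by blast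
    obtain K where HK: "\<And>c. c \<in> S \<Longrightarrow> fields_iso (gen_field (\<xi> c)) K" using H by blast
    have BA: "real_of_int A \<ge> Bnd n M"
    proof -
      have "Bnd n M \<le> real_of_int (ceiling (Bnd n M))" by (rule le_of_int_ceiling)
      also have "\<dots> \<le> real_of_int A" using AA unfolding A1_def by simp
      finally show ?thesis .
    qed
    have A12: "real_of_int A \<ge> 12" using Bnd_facts(2)[OF n3 Msum_nonneg BA[unfolded M_def]] .
    have cR: "real_of_int A \<le> \<bar>real_of_int c\<bar> \<and> \<bar>real_of_int c\<bar> \<le> 2 * real_of_int A" if "c \<in> S" for c
      using Hc[OF that] by (metis of_int_abs of_int_le_iff of_int_mult of_int_numeral)
    have rsc: "rs n a c" if "c \<in> S" for c
      using n3 inj BA cR[OF that] unfolding M_def by unfold_locales auto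
    have fin: "finite S"
    proof (rule finite_subset)
      show "S \<subseteq> {-2*A..2*A}" using Hc by fastforce
    qed simp
    show "card S \<le> n * (n-1) * (n-2)"
    proof (cases "S = {}")
      case True
      then show ?thesis by simp
    next
      case False
      then obtain b where bS: "b \<in> S" by blast
      define \<theta> where "\<theta> = \<xi> b"
      have bnot: "b \<notin> a ` {..<n-1}" using Hc[OF bS] by blast
      have rtb: "ev (fQ n a b) \<theta> = 0" unfolding ev_fQ \<theta>_def using Hc[OF bS] by blast
      define T where "T = {z. poly (of_int_poly (f_poly n a b) :: complex poly) z = 0}"
      have T: "finite T" "card T = n" using rs.card_roots[OF rsc[OF bS]] unfolding T_def by auto
      obtain th where th: "bij_betw th {0..<n} T" using ex_bij_betw_nat_finite[OF T(1)] T(2) by auto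
      have thT: "ev (fQ n a b) (th k) = 0" if "k < n" for k
        using th that unfolding bij_betw_def T_def ev_fQ by auto
      have thinj: "inj_on th {..<n}" using th unfolding bij_betw_def by (simp add: lessThan_atLeast0)
      have "\<forall>c\<in>S. \<exists>E R. ev (fQ n a c) (ev E \<theta>) = 0 \<and> ev R (ev E \<theta>) = \<theta>"
      proof
        fix c assume cS: "c \<in> S"
        show "\<exists>E R. ev (fQ n a c) (ev E \<theta>) = 0 \<and> ev R (ev E \<theta>) = \<theta>"
          by (rule transfer[OF n1 inj _ bnot _ rtb HK[OF cS] HK[OF bS, folded \<theta>_def]])
            (use Hc[OF cS] in \<open>auto simp: ev_fQ\<close>)
      qed
      then obtain E where "\<forall>c\<in>S. \<exists>R. ev (fQ n a c) (ev (E c) \<theta>) = 0 \<and> ev R (ev (E c) \<theta>) = \<theta>"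
        by (metis bchoice)
      then obtain R where ER: "\<And>c. c \<in> S \<Longrightarrow> ev (fQ n a c) (ev (E c) \<theta>) = 0 \<and> ev (R c) (ev (E c) \<theta>) = \<theta>"
        by (metis bchoice)
      define r where "r = (\<lambda>c k. ev (E c) (th k))"
      have rroot: "poly (of_int_poly (f_poly n a c) :: complex poly) (r c k) = 0" if "c \<in> S" "k < n" for c k
      proof -
        have "ev (fQ n a c \<circ>\<^sub>p E c) \<theta> = 0" using ER[OF that(1)] by (simp add: ev_pcompose)
        hence "fQ n a b dvd (fQ n a c \<circ>\<^sub>p E c)" by (rule minpoly[OF n1 inj bnot rtb])
        hence "ev (fQ n a c \<circ>\<^sub>p E c) (th k) = 0" using thT[OF that(2)] by (rule ev_dvd)
        thus ?thesis by (simp add: ev_pcompose r_def ev_fQ)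
      qed
      have rinv: "ev (R c) (r c k) = th k" if "c \<in> S" "k < n" for c k
      proof -
        have "ev (R c \<circ>\<^sub>p E c - [:0,1:]) \<theta> = 0" using ER[OF that(1)] by (simp add: ev_pcompose)
        hence "fQ n a b dvd (R c \<circ>\<^sub>p E c - [:0,1:])" by (rule minpoly[OF n1 inj bnot rtb])
        hence "ev (R c \<circ>\<^sub>p E c - [:0,1:]) (th k) = 0" using thT[OF that(2)] by (rule ev_dvd)
        thus ?thesis by (simp add: ev_pcompose r_def)
      qed
      have rinj: "r c k \<noteq> r c l" if "c \<in> S" "k < n" "l < n" "k \<noteq> l" for c k l
      proof
        assume "r c k = r c l"
        hence "th k = th l" using rinv[OF that(1,2)] rinv[OF that(1,3)] by simp
        thus False using thinj that unfolding inj_on_def by auto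
      qed
      define Lg where "Lg = (\<lambda>c k. large n c (r c k))"
      have uniqL: False if "c \<in> S" "k < n" "l < n" "k \<noteq> l" "Lg c k" "Lg c l" for c k l
        using rs.distinct_large[OF rsc[OF that(1)] rroot[OF that(1,2)] rroot[OF that(1,3)] rinj[OF that(1-4)]]
          that(5,6) unfolding Lg_def by blast
      have uniqN: False if "c \<in> S" "k < n" "l < n" "k \<noteq> l" "near n a c (r c k) i" "near n a c (r c l) i" for c k l i
        using rs.distinct_near[OF rsc[OF that(1)] rroot[OF that(1,2)] rroot[OF that(1,3)] rinj[OF that(1-4)]]
          that(5,6) by blast
      define j where "j = (\<lambda>c. if \<exists>k<n. Lg c k then (SOME k. k < n \<and> Lg c k) else 0)"
      have jprop: "j c < n \<and> (\<forall>k<n. k \<noteq> j c \<longrightarrow> \<not> Lg c k)" if cS: "c \<in> S" for c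
      proof (cases "\<exists>k<n. Lg c k")
        case True
        have "\<exists>k. k < n \<and> Lg c k" using True by blast
        hence "(SOME k. k < n \<and> Lg c k) < n \<and> Lg c (SOME k. k < n \<and> Lg c k)" by (rule someI_ex)
        hence jc: "j c < n \<and> Lg c (j c)" unfolding j_def using True by simp
        show ?thesis using jc uniqL[OF cS] by blast
      next
        case False
        thus ?thesis unfolding j_def using n3 by auto
      qed
      have nearex: "\<exists>i. near n a c (r c k) i \<and> cmod (r c k) \<le> M + 1/2" if cS: "c \<in> S" and k: "k < n" "k \<noteq> j c" for c k
        using rs.cls[OF rsc[OF cS] rroot[OF cS k(1)]] jprop[OF cS] k unfolding Lg_def M_def by blast
      define cl where "cl = (\<lambda>c k. SOME i. near n a c (r c k) i)"
      have clprop: "near n a c (r c k) (cl c k)" if cS: "c \<in> S" and k: "k < n" "k \<noteq> j c" for c k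
        unfolding cl_def using nearex[OF cS k] by (metis (mono_tags, lifting) someI_ex)
      define k1 where "k1 = (\<lambda>c. if j c = 0 then (1::nat) else 0)"
      define k2 where "k2 = (\<lambda>c. if j c \<le> 1 then (2::nat) else 1)"
      have kprop: "k1 c < n" "k2 c < n" "k1 c \<noteq> k2 c" "k1 c \<noteq> j c" "k2 c \<noteq> j c" for c
        unfolding k1_def k2_def using n3 by auto
      have cl_lt: "cl c k < n - 1" if "c \<in> S" "k < n" "k \<noteq> j c" for c k
        using clprop[OF that] unfolding near_def by simp
      have cl_ne: "cl c (k1 c) \<noteq> cl c (k2 c)" if cS: "c \<in> S" for c
      proof
        assume eq: "cl c (k1 c) = cl c (k2 c)"
        show False using uniqN[OF cS kprop(1)[of c] kprop(2)[of c] kprop(3)[of c], of "cl c (k1 c)"]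
            clprop[OF cS kprop(1) kprop(4)] clprop[OF cS kprop(2) kprop(5)] eq by simp
      qed
      define code where "code = (\<lambda>c. (j c, cl c (k1 c),
          (if cl c (k2 c) < cl c (k1 c) then cl c (k2 c) else cl c (k2 c) - 1)))"
      have code_in: "code ` S \<subseteq> {..<n} \<times> {..<n-1} \<times> {..<n-2}"
      proof
        fix y assume "y \<in> code ` S"
        then obtain c where cS: "c \<in> S" and y: "y = code c" by blast
        have "j c < n" using jprop[OF cS] by blast
        moreover have "cl c (k1 c) < n - 1" using cl_lt[OF cS kprop(1) kprop(4)] .
        moreover have "cl c (k2 c) < n - 1" using cl_lt[OF cS kprop(2) kprop(5)] .
        moreover have "cl c (k1 c) \<noteq> cl c (k2 c)" using cl_ne[OF cS] .
        ultimately show "y \<in> {..<n} \<times> {..<n-1} \<times> {..<n-2}" unfolding y code_def by auto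
      qed
      have NZ: "(\<Prod>k<n. r c k - r c' k) \<in> \<int>" if cS: "c \<in> S" and cS': "c' \<in> S" for c c'
      proof -
        have ai: "algebraic_int (r c k - r c' k)" if k: "k < n" for k
          using root_algint[OF n1 rroot[OF cS k]] root_algint[OF n1 rroot[OF cS' k]] by (rule algint_diff)
        have "algebraic_int (\<Prod>k<n. r c k - r c' k)" by (rule algint_prod) (use ai in auto)
        moreover have "(\<Prod>k<n. r c k - r c' k) \<in> \<rat>"
        proof -
          have "(\<Prod>k<n. ev (E c - E c') (th k)) \<in> \<rat>"
            using norm_rat[OF n1 _ _ thT thinj] fQ_deg[of n a b, OF n1] by blast
          thus ?thesis unfolding r_def by simp
        qed
        ultimately show ?thesis by (rule rational_algebraic_int_is_int)
      qed
      have code_inj: "inj_on code S"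
      proof (rule inj_onI, rule ccontr)
        fix c c' assume cS: "c \<in> S" and cS': "c' \<in> S" and eq: "code c = code c'" and ne: "c \<noteq> c'"
        have jj: "j c = j c'" using eq unfolding code_def by simp
        have kk: "k1 c = k1 c'" "k2 c = k2 c'" unfolding k1_def k2_def using jj by auto
        have i1: "cl c (k1 c) = cl c' (k1 c')" using eq unfolding code_def by simp
        have i2: "cl c (k2 c) = cl c' (k2 c')"
          using eq cl_ne[OF cS] cl_ne[OF cS'] i1 unfolding code_def by (auto split: if_splits)
        show False
        proof (rule norm_contra[OF n3 inj, of "real_of_int A" c c' "r c" "r c'" "j c" "k1 c" "k2 c"
              "cl c (k1 c)" "cl c (k2 c)"])
          show "Bnd n (Msum n a) \<le> real_of_int A" using BA unfolding M_def .
          show "real_of_int A \<le> \<bar>real_of_int c\<bar>" "\<bar>real_of_int c\<bar> \<le> 2 * real_of_int A" using cR[OF cS] by auto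
          show "real_of_int A \<le> \<bar>real_of_int c'\<bar>" "\<bar>real_of_int c'\<bar> \<le> 2 * real_of_int A" using cR[OF cS'] by auto
          show "c \<noteq> c'" by (rule ne)
          show "poly (of_int_poly (f_poly n a c)) (r c k) = 0" if "k < n" for k using rroot[OF cS that] .
          show "poly (of_int_poly (f_poly n a c')) (r c' k) = 0" if "k < n" for k using rroot[OF cS' that] .
          show "j c < n" using jprop[OF cS] by blast
          show "k1 c < n" "k2 c < n" "j c \<noteq> k1 c" "j c \<noteq> k2 c" "k1 c \<noteq> k2 c" using kprop[of c] by auto
          show "near n a c (r c (k1 c)) (cl c (k1 c))" using clprop[OF cS kprop(1) kprop(4)] .
          show "near n a c' (r c' (k1 c)) (cl c (k1 c))" using clprop[OF cS' kprop(1) kprop(4)] kk jj i1 by simp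
          show "near n a c (r c (k2 c)) (cl c (k2 c))" using clprop[OF cS kprop(2) kprop(5)] .
          show "near n a c' (r c' (k2 c)) (cl c (k2 c))" using clprop[OF cS' kprop(2) kprop(5)] kk jj i2 by simp
          show "cmod (r c k) \<le> Msum n a + 1/2 \<and> cmod (r c' k) \<le> Msum n a + 1/2"
            if "k < n" "k \<notin> {j c, k1 c, k2 c}" for k
          proof -
            have "k \<noteq> j c" "k \<noteq> j c'" using that jj by auto
            thus ?thesis using nearex[OF cS that(1)] nearex[OF cS' that(1)] unfolding M_def by auto
          qed
          show "(\<Prod>k<n. r c k - r c' k) \<in> \<int>" by (rule NZ[OF cS cS'])
        qed
      qed
      have "card S \<le> card ({..<n} \<times> {..<n-1} \<times> {..<n-2})"
        by (rule card_inj_on_le[OF code_inj code_in]) simp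
      also have "\<dots> = n * (n-1) * (n-2)" by (simp add: card_cartesian_product)
      finally show ?thesis .
    qed
  qed
qed

end
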